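(* Let $X$ be the killed diffusion on $(0,\infty)$ described in the context. If $$\liminf_{z\to\infty}z^{-2}\bigl(b(z)^2+b'(z)+2\kappa(z)\bigr)>-\infty\quad\text{or}\quad\kappa\equiv0,$$ then the differential operator $\mathcal{L}^*\phi=\tfrac12\phi''-(b\phi)'-\kappa\phi$ is in the limit-point case at $\infty$.
   Context: $X$ is a one-dimensional diffusion on $(0,\infty)$ with diffusion coefficient identically $1$, drift $b\in C^1((0,\infty))$ and continuous killing rate $\kappa\ge0$; the endpoint $0$ is regular and the endpoint $\infty$ is inaccessible (natural or entrance). "Limit-point case at $\infty$" refers to Weyl's classification of singular Sturm–Liouville operators. *)

theory Defs
  imports "HOL-Analysis.Analysis"
begin

definition drift_prim :: "(real \<Rightarrow> real) \<Rightarrow> real \<Rightarrow> real" where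
  "drift_prim b x = (if 1 \<le> x then integral {1..x} b else - integral {x..1} b)"

text \<open>Scale density s(x) = exp(-2 B(x)) and speed density m(x) = 2 exp(2 B(x))
  of the diffusion with generator (1/2) f'' + b f' - kappa f.\<close>
definition scale_dens :: "(real \<Rightarrow> real) \<Rightarrow> real \<Rightarrow> real" where
  "scale_dens b x = exp (- 2 * drift_prim b x)"

definition speed_dens :: "(real \<Rightarrow> real) \<Rightarrow> real \<Rightarrow> real" where
  "speed_dens b x = 2 * exp (2 * drift_prim b x)"

definition regular_at_0 :: "(real \<Rightarrow> real) \<Rightarrow> (real \<Rightarrow> real) \<Rightarrow> bool" where
  "regular_at_0 b \<kappa> \<longleftrightarrow>
     set_integrable lborel {0<..1} (scale_dens b) \<and>
     set_integrable lborel {0<..1} (speed_dens b) \<and>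
     set_integrable lborel {0<..1} (\<lambda>x. \<kappa> x * speed_dens b x)"

text \<open>Feller test (with killing measure kappa(y) m(y) dy): infinity is inaccessible
  (natural or entrance) iff int_1^infty s(x) int_1^x (1 + kappa) m dy dx = infinity.\<close>
definition inaccessible_at_infty :: "(real \<Rightarrow> real) \<Rightarrow> (real \<Rightarrow> real) \<Rightarrow> bool" where
  "inaccessible_at_infty b \<kappa> \<longleftrightarrow>
     (\<integral>\<^sup>+ x \<in> {1..}. ennreal (scale_dens b x *
          integral {1..x} (\<lambda>y. (1 + \<kappa> y) * speed_dens b y)) \<partial>lborel) = \<infinity>"

text \<open>phi (with first and second derivatives phi1, phi2) solves
  L* phi = lambda phi on (0,infty), where
  L* phi = (1/2) phi'' - (b phi)' - kappa phi = (1/2) phi'' - b phi' - b' phi - kappa phi.\<close>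
definition Lstar_solution ::
  "(real \<Rightarrow> real) \<Rightarrow> (real \<Rightarrow> real) \<Rightarrow> (real \<Rightarrow> real) \<Rightarrow> complex \<Rightarrow>
   (real \<Rightarrow> complex) \<Rightarrow> (real \<Rightarrow> complex) \<Rightarrow> (real \<Rightarrow> complex) \<Rightarrow> bool" where
  "Lstar_solution b db \<kappa> lam \<phi> \<phi>1 \<phi>2 \<longleftrightarrow>
     (\<forall>x>0. (\<phi> has_vector_derivative \<phi>1 x) (at x) \<and>
            (\<phi>1 has_vector_derivative \<phi>2 x) (at x) \<and>
            \<phi>2 x / 2 - (complex_of_real (b x) * \<phi>1 x + complex_of_real (db x) * \<phi> x)
              - complex_of_real (\<kappa> x) * \<phi> x = lam * \<phi> x)"

definition sq_int_near_infty :: "(real \<Rightarrow> real) \<Rightarrow> (real \<Rightarrow> complex) \<Rightarrow> bool" where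
  "sq_int_near_infty w \<phi> \<longleftrightarrow> (\<exists>c. (\<lambda>x. w x * (cmod (\<phi> x))\<^sup>2) integrable_on {c..})"

text \<open>In Sturm--Liouville form, L* phi = (1/w) ( ((w/2) phi')' - (b' + kappa) w phi ) with
  weight w = exp(-2B) = scale density; L* is formally symmetric in L^2(w dx).
  Weyl: limit-point at infinity iff (for every lambda in C) some solution of
  L* phi = lambda phi is not in L^2(w dx) near infinity, i.e. not limit-circle.\<close>
definition Lstar_limit_point_at_infty ::
  "(real \<Rightarrow> real) \<Rightarrow> (real \<Rightarrow> real) \<Rightarrow> (real \<Rightarrow> real) \<Rightarrow> bool" where
  "Lstar_limit_point_at_infty b db \<kappa> \<longleftrightarrow>
     (\<forall>lam::complex. \<exists>\<phi> \<phi>1 \<phi>2. Lstar_solution b db \<kappa> lam \<phi> \<phi>1 \<phi>2 \<and>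
        \<not> sq_int_near_infty (scale_dens b) \<phi>)"

end

theory Submission
  imports Defs
begin


definition pint :: "(real \<Rightarrow> 'a::banach) \<Rightarrow> real \<Rightarrow> 'a" where
  "pint f x = (if 1 \<le> x then integral {1..x} f else - integral {x..1} f)"

lemma drift_prim_pint: "drift_prim b = pint b"
  by (auto simp: drift_prim_def pint_def fun_eq_iff)

lemma pint_alt:
  fixes f :: "real \<Rightarrow> 'a::banach"
  assumes "continuous_on {a..c} f" "a \<le> y" "y \<le> c" "a \<le> 1" "1 \<le> c"
  shows "pint f y = integral {a..y} f - integral {a..1} f"
proof (cases "1 \<le> y")
  case True
  have "integral {a..1} f + integral {1..y} f = integral {a..y} f"
    by (rule Henstock_Kurzweil_Integration.integral_combine) (use True assms in \<open>auto intro!: integrable_continuous_real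
         intro: continuous_on_subset\<close>)
  then show ?thesis using True by (auto simp: pint_def algebra_simps)
next
  case False
  have "integral {a..y} f + integral {y..1} f = integral {a..1} f"
    by (rule Henstock_Kurzweil_Integration.integral_combine) (use False assms in \<open>auto intro!: integrable_continuous_real
         intro: continuous_on_subset\<close>)
  then show ?thesis using False by (auto simp: pint_def algebra_simps)
qed

lemma pint_deriv:
  fixes f :: "real \<Rightarrow> 'a::banach"
  assumes f: "continuous_on {0<..} f" and x: "x > 0"
  shows "(pint f has_vector_derivative f x) (at x)"
proof -
  define a where "a = min (x/2) (1/2)"
  define c where "c = max (2*x) 2"
  have a: "0 < a" "a < x" "a \<le> 1" using x by (auto simp: a_def)
  have c: "x < c" "1 \<le> c" using x by (auto simp: c_def)
  have fc: "continuous_on {a..c} f" using a by (auto intro: continuous_on_subset[OF f])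
  have "((\<lambda>u. integral {a..u} f) has_vector_derivative f x) (at x within {a..c})"
    by (rule integral_has_vector_derivative[OF fc]) (use a c in auto)
  then have "((\<lambda>u. integral {a..u} f) has_vector_derivative f x) (at x)"
    using at_within_Icc_at[of a x c] a c by simp
  then have "((\<lambda>u. integral {a..u} f - integral {a..1} f) has_vector_derivative f x - 0) (at x)"
    by (intro derivative_intros)
  then have "((\<lambda>u. integral {a..u} f - integral {a..1} f) has_vector_derivative f x) (at x)"
    by simp
  then show ?thesis
    by (rule has_vector_derivative_transform_within_open[where S="{a<..<c}"])
       (use a c in \<open>auto simp: pint_alt[OF fc]\<close>)
qed

lemma pint_cont:
  fixes f :: "real \<Rightarrow> 'a::banach"
  assumes "continuous_on {0<..} f"
  shows "continuous_on {0<..} (pint f)"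
  by (rule continuous_at_imp_continuous_on)
     (use pint_deriv[OF assms] in \<open>auto intro: has_vector_derivative_continuous\<close>)

lemma pint_1 [simp]: "pint f 1 = 0"
  by (simp add: pint_def)



lemma pint_pow_bound:
  fixes f :: "real \<Rightarrow> 'a::banach"
  assumes f: "continuous_on {0<..} f" and x: "x > 0"
    and bnd: "\<And>t. t \<in> {min x 1..max x 1} \<Longrightarrow> norm (f t) \<le> C * \<bar>t - 1\<bar> ^ n"
  shows "norm (pint f x) \<le> C * \<bar>x - 1\<bar> ^ Suc n / Suc n"
proof (cases "1 \<le> x")
  case True
  have fi: "f integrable_on {1..x}"
    by (rule integrable_continuous_real) (use True in \<open>auto intro: continuous_on_subset[OF f]\<close>)
  have "((\<lambda>t. C * (t - 1) ^ n) has_integral (C * (x - 1) ^ Suc n / Suc n - C * (1 - 1) ^ Suc n / Suc n)) {1..x}"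
    apply (rule fundamental_theorem_of_calculus[OF True])
    apply (rule has_real_derivative_iff_has_vector_derivative[THEN iffD1])
    apply (rule derivative_eq_intros refl)+
    apply (simp_all del: of_nat_Suc)
    done
  then have gi: "((\<lambda>t. C * (t - 1) ^ n) has_integral (C * (x - 1) ^ Suc n / Suc n)) {1..x}" by simp
  have "norm (integral {1..x} f) \<le> integral {1..x} (\<lambda>t. C * (t - 1) ^ n)"
    by (rule integral_norm_bound_integral[OF fi]) (use gi bnd True in \<open>auto\<close>)
  then show ?thesis using True integral_unique[OF gi] by (simp add: pint_def)
next
  case False
  have fi: "f integrable_on {x..1}"
    by (rule integrable_continuous_real) (use x in \<open>auto intro: continuous_on_subset[OF f]\<close>)
  have "((\<lambda>t. C * (1 - t) ^ n) has_integral ((- C * (1 - 1) ^ Suc n / Suc n) - (- C * (1 - x) ^ Suc n / Suc n))) {x..1}"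
    apply (rule fundamental_theorem_of_calculus)
    using False apply simp
    apply (rule has_real_derivative_iff_has_vector_derivative[THEN iffD1])
    apply (rule derivative_eq_intros refl)+
    apply (simp_all del: of_nat_Suc)
    done
  then have gi: "((\<lambda>t. C * (1 - t) ^ n) has_integral (C * (1 - x) ^ Suc n / Suc n)) {x..1}" by simp
  have "norm (integral {x..1} f) \<le> integral {x..1} (\<lambda>t. C * (1 - t) ^ n)"
    by (rule integral_norm_bound_integral[OF fi]) (use gi bnd False in \<open>auto simp: abs_minus_commute\<close>)
  then show ?thesis using False integral_unique[OF gi] by (simp add: pint_def abs_minus_commute)
qed

lemma series_vderiv:
  fixes f d :: "nat \<Rightarrow> real \<Rightarrow> 'a::banach"
  assumes der: "\<And>n y. y \<in> {a<..<c} \<Longrightarrow> (f n has_vector_derivative d n y) (at y)"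
    and bf: "\<And>n y. y \<in> {a<..<c} \<Longrightarrow> norm (f n y) \<le> M n"
    and bd: "\<And>n y. y \<in> {a<..<c} \<Longrightarrow> norm (d n y) \<le> M' n"
    and M: "summable M" and M': "summable M'" and x: "x \<in> {a<..<c}"
  shows "((\<lambda>y. \<Sum>n. f n y) has_vector_derivative (\<Sum>n. d n x)) (at x)"
proof -
  let ?S = "{a<..<c}"
  have ul: "uniform_limit ?S (\<lambda>n y. \<Sum>i<n. d i y) (\<lambda>y. \<Sum>i. d i y) sequentially"
    by (rule Weierstrass_m_test[OF bd M'])
  have sf: "summable (\<lambda>n. f n x)"
    by (rule summable_comparison_test[OF _ M]) (use bf x in auto)
  have "\<exists>g. \<forall>y\<in>?S. (\<lambda>n. f n y) sums (g y) \<and>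
          (g has_derivative (\<lambda>h. h *\<^sub>R (\<Sum>i. d i y))) (at y within ?S)"
  proof (rule has_derivative_series[where f'="\<lambda>n y h. h *\<^sub>R d n y"])
    show "convex ?S" by simp
    show "(f n has_derivative (\<lambda>h. h *\<^sub>R d n y)) (at y within ?S)" if "y \<in> ?S" for n y
      using der[OF that] by (auto simp: has_vector_derivative_def intro: has_derivative_at_withinI)
    show "\<forall>\<^sub>F n in sequentially. \<forall>y\<in>?S. \<forall>h. norm ((\<Sum>i<n. h *\<^sub>R d i y) - h *\<^sub>R (\<Sum>i. d i y)) \<le> e * norm h"
      if "e > 0" for e
    proof -
      from uniform_limitD[OF ul that] have "\<forall>\<^sub>F n in sequentially. \<forall>y\<in>?S. dist (\<Sum>i<n. d i y) (\<Sum>i. d i y) < e" .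
      then show ?thesis
      proof (rule eventually_mono)
        fix n assume H: "\<forall>y\<in>?S. dist (\<Sum>i<n. d i y) (\<Sum>i. d i y) < e"
        show "\<forall>y\<in>?S. \<forall>h. norm ((\<Sum>i<n. h *\<^sub>R d i y) - h *\<^sub>R (\<Sum>i. d i y)) \<le> e * norm h"
        proof (intro ballI allI)
          fix y h assume y: "y \<in> ?S"
          have "norm ((\<Sum>i<n. h *\<^sub>R d i y) - h *\<^sub>R (\<Sum>i. d i y)) = \<bar>h\<bar> * norm ((\<Sum>i<n. d i y) - (\<Sum>i. d i y))"
            by (simp add: scaleR_sum_right[symmetric] scaleR_diff_right[symmetric])
          also have "\<dots> \<le> \<bar>h\<bar> * e" using H y by (intro mult_left_mono) (auto simp: dist_norm less_imp_le)
          finally show "norm ((\<Sum>i<n. h *\<^sub>R d i y) - h *\<^sub>R (\<Sum>i. d i y)) \<le> e * norm h" by (simp add: mult.commute)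
        qed
      qed
    qed
    show "x \<in> ?S" by fact
    show "(\<lambda>n. f n x) sums (\<Sum>n. f n x)" using sf by (simp add: summable_sums)
  qed
  then obtain g where g: "\<And>y. y \<in> ?S \<Longrightarrow> (\<lambda>n. f n y) sums (g y)"
    "\<And>y. y \<in> ?S \<Longrightarrow> (g has_derivative (\<lambda>h. h *\<^sub>R (\<Sum>i. d i y))) (at y within ?S)" by blast
  have "(g has_vector_derivative (\<Sum>i. d i x)) (at x)"
    using g(2)[OF x] x by (simp add: has_vector_derivative_def at_within_open[of x ?S])
  then show ?thesis
    by (rule has_vector_derivative_transform_within_open[where S="?S"])
       (use x g(1) in \<open>auto simp: sums_iff\<close>)
qed

fun pic :: "(real \<Rightarrow> complex) \<Rightarrow> complex \<Rightarrow> complex \<Rightarrow> nat \<Rightarrow> (real \<Rightarrow> complex) \<times> (real \<Rightarrow> complex)" where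
  "pic Q \<alpha> \<beta> 0 = (\<lambda>_. \<alpha>, \<lambda>_. \<beta>)"
| "pic Q \<alpha> \<beta> (Suc n) = (pint (snd (pic Q \<alpha> \<beta> n)), pint (\<lambda>t. Q t * fst (pic Q \<alpha> \<beta> n) t))"

lemma pic_cont:
  assumes Q: "continuous_on {0<..} Q"
  shows "continuous_on {0<..} (fst (pic Q \<alpha> \<beta> n)) \<and> continuous_on {0<..} (snd (pic Q \<alpha> \<beta> n))"
  by (induction n) (auto intro!: pint_cont continuous_intros Q)

lemma pic_deriv:
  assumes Q: "continuous_on {0<..} Q" and x: "x > 0"
  shows "(fst (pic Q \<alpha> \<beta> (Suc n)) has_vector_derivative snd (pic Q \<alpha> \<beta> n) x) (at x)"
    "(snd (pic Q \<alpha> \<beta> (Suc n)) has_vector_derivative Q x * fst (pic Q \<alpha> \<beta> n) x) (at x)"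
  using pic_cont[OF Q, of \<alpha> \<beta> n] x
  by (auto intro!: pint_deriv continuous_intros Q)

lemma pic_bound:
  assumes Q: "continuous_on {0<..} Q" and a: "0 < a" "a \<le> 1" "1 \<le> c"
    and L: "1 \<le> L" "\<And>t. t \<in> {a..c} \<Longrightarrow> norm (Q t) \<le> L"
    and K: "norm \<alpha> \<le> K" "norm \<beta> \<le> K"
  shows "\<forall>x\<in>{a..c}. norm (fst (pic Q \<alpha> \<beta> n) x) \<le> K * L ^ n / fact n * \<bar>x - 1\<bar> ^ n
        \<and> norm (snd (pic Q \<alpha> \<beta> n) x) \<le> K * L ^ n / fact n * \<bar>x - 1\<bar> ^ n"
proof (induction n)
  case 0
  then show ?case using K by simp
next
  case (Suc n)
  have K0: "0 \<le> K" using K(1) norm_ge_zero order_trans by blast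
  show ?case
  proof
    fix x assume x: "x \<in> {a..c}"
    have sub: "t \<in> {a..c}" if "t \<in> {min x 1..max x 1}" for t using that x a by auto
    have "norm (fst (pic Q \<alpha> \<beta> (Suc n)) x) \<le> K * L ^ n / fact n * \<bar>x - 1\<bar> ^ Suc n / Suc n"
      using pint_pow_bound[of "snd (pic Q \<alpha> \<beta> n)" x "K * L ^ n / fact n" n] pic_cont[OF Q] x a
        Suc.IH sub by auto
    also have "\<dots> = K * L ^ n / fact (Suc n) * \<bar>x - 1\<bar> ^ Suc n"
      by (simp add: field_simps)
    also have "\<dots> \<le> K * L ^ Suc n / fact (Suc n) * \<bar>x - 1\<bar> ^ Suc n"
      using L K0 by (intro mult_right_mono divide_right_mono mult_left_mono) auto
    finally have 1: "norm (fst (pic Q \<alpha> \<beta> (Suc n)) x) \<le> K * L ^ Suc n / fact (Suc n) * \<bar>x - 1\<bar> ^ Suc n" .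
    have "norm (snd (pic Q \<alpha> \<beta> (Suc n)) x) \<le> (L * (K * L ^ n / fact n)) * \<bar>x - 1\<bar> ^ Suc n / Suc n"
    proof -
      have "norm (Q t * fst (pic Q \<alpha> \<beta> n) t) \<le> (L * (K * L ^ n / fact n)) * \<bar>t - 1\<bar> ^ n"
        if t: "t \<in> {min x 1..max x 1}" for t
      proof -
        have "norm (Q t * fst (pic Q \<alpha> \<beta> n) t) = norm (Q t) * norm (fst (pic Q \<alpha> \<beta> n) t)"
          by (simp add: norm_mult)
        also have "\<dots> \<le> L * (K * L ^ n / fact n * \<bar>t - 1\<bar> ^ n)"
          using L(2)[OF sub[OF t]] Suc.IH sub[OF t] L by (intro mult_mono) auto
        finally show ?thesis by simp
      qed
      then show ?thesis
        using pint_pow_bound[of "\<lambda>t. Q t * fst (pic Q \<alpha> \<beta> n) t" x "L * (K * L ^ n / fact n)" n]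
          pic_cont[OF Q] x a by (auto intro!: continuous_intros Q)
    qed
    also have "\<dots> = K * L ^ Suc n / fact (Suc n) * \<bar>x - 1\<bar> ^ Suc n"
      by (simp add: field_simps)
    finally show "norm (fst (pic Q \<alpha> \<beta> (Suc n)) x) \<le> K * L ^ Suc n / fact (Suc n) * \<bar>x - 1\<bar> ^ Suc n
        \<and> norm (snd (pic Q \<alpha> \<beta> (Suc n)) x) \<le> K * L ^ Suc n / fact (Suc n) * \<bar>x - 1\<bar> ^ Suc n"
      using 1 by simp
  qed
qed



lemma ode_exists:
  fixes Q :: "real \<Rightarrow> complex"
  assumes Q: "continuous_on {0<..} Q"
  shows "\<exists>y y'. (\<forall>x>0. (y has_vector_derivative y' x) (at x) \<and>
            (y' has_vector_derivative Q x * y x) (at x)) \<and> y 1 = \<alpha> \<and> y' 1 = \<beta>"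
proof -
  define p where "p n = fst (pic Q \<alpha> \<beta> n)" for n
  define r where "r n = snd (pic Q \<alpha> \<beta> n)" for n
  define y where "y x = (\<Sum>n. p n x)" for x
  define y' where "y' x = (\<Sum>n. r n x)" for x
  define K where "K = max (norm \<alpha>) (norm \<beta>)"
  have loc: "\<exists>a c L M. a < x \<and> x < c \<and> 0 < a \<and> 0 \<le> L \<and> summable M \<and>
      (\<forall>t\<in>{a<..<c}. \<forall>n. norm (p n t) \<le> M n \<and> norm (r n t) \<le> M n \<and> norm (Q t) \<le> L)"
    if x: "x > 0" for x
  proof -
    define a where "a = min (x/2) (1/2)"
    define c where "c = max (2*x) 2"
    have a: "0 < a" "a < x" "a \<le> 1" using x by (auto simp: a_def)
    have c: "x < c" "1 \<le> c" using x by (auto simp: c_def)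
    have "bounded (Q ` {a..c})"
      by (rule compact_imp_bounded[OF compact_continuous_image])
         (use a in \<open>auto intro: continuous_on_subset[OF Q]\<close>)
    then obtain B where B0: "\<forall>t\<in>{a..c}. norm (Q t) \<le> B" unfolding bounded_iff by auto
    then have B: "\<And>t. t \<in> {a..c} \<Longrightarrow> norm (Q t) \<le> B" by blast
    define L where "L = max 1 B"
    have L: "1 \<le> L" "\<And>t. t \<in> {a..c} \<Longrightarrow> norm (Q t) \<le> L" using B by (auto simp: L_def max.coboundedI2)
    define M where "M n = K * ((L * (c - a)) ^ n / fact n)" for n
    have sM: "summable M" unfolding M_def
      by (rule summable_mult) (use exp_converges[of "L * (c - a)"] in \<open>auto simp: sums_iff divide_inverse mult.commute\<close>)
    have pb: "\<forall>t\<in>{a..c}. norm (p n t) \<le> K * L ^ n / fact n * \<bar>t - 1\<bar> ^ n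
        \<and> norm (r n t) \<le> K * L ^ n / fact n * \<bar>t - 1\<bar> ^ n" for n
      unfolding p_def r_def by (rule pic_bound[OF Q a(1,3) c(2) L]) (auto simp: K_def)
    have K0: "0 \<le> K" by (simp add: K_def le_max_iff_disj)
    have le: "K * L ^ n / fact n * \<bar>t - 1\<bar> ^ n \<le> M n" if t: "t \<in> {a..c}" for t n
    proof -
      have "\<bar>t - 1\<bar> ^ n \<le> (c - a) ^ n" using t a c by (intro power_mono) auto
      then have "K * L ^ n / fact n * \<bar>t - 1\<bar> ^ n \<le> K * L ^ n / fact n * (c - a) ^ n"
        using K0 L by (intro mult_left_mono) auto
      then show ?thesis by (simp add: M_def power_mult_distrib)
    qed
    have "\<forall>t\<in>{a<..<c}. \<forall>n. norm (p n t) \<le> M n \<and> norm (r n t) \<le> M n \<and> norm (Q t) \<le> L"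
    proof (intro ballI allI)
      fix t n assume t: "t \<in> {a<..<c}"
      then have t': "t \<in> {a..c}" by auto
      have 1: "norm (p n t) \<le> K * L ^ n / fact n * \<bar>t - 1\<bar> ^ n" using pb[of n] t' by blast
      have 2: "norm (r n t) \<le> K * L ^ n / fact n * \<bar>t - 1\<bar> ^ n" using pb[of n] t' by blast
      show "norm (p n t) \<le> M n \<and> norm (r n t) \<le> M n \<and> norm (Q t) \<le> L"
        using order_trans[OF 1 le[OF t']] order_trans[OF 2 le[OF t']] L(2)[OF t'] by blast
    qed
    then show ?thesis using a c L sM by (intro exI[of _ a] exI[of _ c] exI[of _ L] exI[of _ M]) auto
  qed
  have dy: "(y has_vector_derivative y' x) (at x)" "(y' has_vector_derivative Q x * y x) (at x)"
    if x: "x > 0" for x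
  proof -
    obtain a c L M where ac: "a < x" "x < c" "0 < a" "0 \<le> L" and sM: "summable M"
      and bd: "\<And>t n. t\<in>{a<..<c} \<Longrightarrow> norm (p n t) \<le> M n \<and> norm (r n t) \<le> M n \<and> norm (Q t) \<le> L"
      using loc[OF x] by blast
    have M0: "0 \<le> M n" for n
      using bd[of "(a+x)/2" n] ac by (auto intro: order_trans[OF norm_ge_zero])
    have sM': "summable (\<lambda>n. if n = 0 then 0 else M (n - 1))"
      by (subst summable_Suc_iff[symmetric]) (simp add: sM)
    have sM'': "summable (\<lambda>n. if n = 0 then 0 else L * M (n - 1))"
      by (subst summable_Suc_iff[symmetric]) (simp add: sM summable_mult)
    have xS: "x \<in> {a<..<c}" using ac by auto
    have sp: "summable (\<lambda>n. p n x)" "summable (\<lambda>n. r n x)"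
      using bd xS by (auto intro!: summable_comparison_test[OF _ sM])
    have "((\<lambda>t. \<Sum>n. p n t) has_vector_derivative (\<Sum>n. (if n = 0 then 0 else r (n - 1) x))) (at x)"
    proof (rule series_vderiv[where M=M and M'="\<lambda>n. if n = 0 then 0 else M (n - 1)" and a=a and c=c])
      show "(p n has_vector_derivative (if n = 0 then 0 else r (n - 1) t)) (at t)" if "t \<in> {a<..<c}" for n t
        using that ac pic_deriv(1)[OF Q, of t \<alpha> \<beta> "n - 1"]
        by (cases n) (auto simp: p_def r_def)
      show "norm (if n = 0 then 0 else r (n - 1) t) \<le> (if n = 0 then 0 else M (n - 1))"
        if "t \<in> {a<..<c}" for n t using bd[OF that] by auto
    qed (use bd sM sM' xS in auto)
    moreover have "(\<Sum>n. (if n = 0 then 0 else r (n - 1) x)) = y' x"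
    proof -
      have "(\<lambda>n. (\<lambda>n. if n = 0 then 0 else r (n - 1) x) (Suc n)) sums y' x"
        using sp by (simp add: y'_def summable_sums)
      then show ?thesis by (subst (asm) sums_Suc_iff) (simp add: sums_iff)
    qed
    ultimately show "(y has_vector_derivative y' x) (at x)" by (simp add: y_def[abs_def])
    have "((\<lambda>t. \<Sum>n. r n t) has_vector_derivative (\<Sum>n. (if n = 0 then 0 else Q x * p (n - 1) x))) (at x)"
    proof (rule series_vderiv[where M=M and M'="\<lambda>n. if n = 0 then 0 else L * M (n - 1)" and a=a and c=c])
      show "(r n has_vector_derivative (if n = 0 then 0 else Q t * p (n - 1) t)) (at t)" if "t \<in> {a<..<c}" for n t
        using that ac pic_deriv(2)[OF Q, of t \<alpha> \<beta> "n - 1"]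
        by (cases n) (auto simp: p_def r_def)
      show "norm (if n = 0 then 0 else Q t * p (n - 1) t) \<le> (if n = 0 then 0 else L * M (n - 1))"
        if "t \<in> {a<..<c}" for n t using bd[OF that] ac
        by (auto simp: norm_mult intro!: mult_mono)
    qed (use bd sM sM'' xS in auto)
    moreover have "(\<Sum>n. (if n = 0 then 0 else Q x * p (n - 1) x)) = Q x * y x"
    proof -
      have "(\<lambda>n. (\<lambda>n. if n = 0 then 0 else Q x * p (n - 1) x) (Suc n)) sums (Q x * y x)"
        using sp by (simp add: y_def summable_sums sums_mult)
      then show ?thesis by (subst (asm) sums_Suc_iff) (simp add: sums_iff)
    qed
    ultimately show "(y' has_vector_derivative Q x * y x) (at x)" by (simp add: y'_def[abs_def])
  qed
  have "(\<lambda>n. p n 1) = (\<lambda>n. if n = 0 then \<alpha> else 0)"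
    by (rule ext) (case_tac n, auto simp: p_def)
  then have y1: "y 1 = \<alpha>" using sums_single[of 0 "\<lambda>_. \<alpha>"] by (simp add: y_def sums_iff)
  have "(\<lambda>n. r n 1) = (\<lambda>n. if n = 0 then \<beta> else 0)"
    by (rule ext) (case_tac n, auto simp: r_def)
  then have y1': "y' 1 = \<beta>" using sums_single[of 0 "\<lambda>_. \<beta>"] by (simp add: y'_def sums_iff)
  show ?thesis using dy y1 y1' by blast
qed



definition sol :: "(real \<Rightarrow> complex) \<Rightarrow> (real \<Rightarrow> complex) \<Rightarrow> (real \<Rightarrow> complex) \<Rightarrow> bool" where
  "sol Q y y' \<longleftrightarrow> (\<forall>x>0. (y has_vector_derivative y' x) (at x) \<and> (y' has_vector_derivative Q x * y x) (at x))"

definition l2b :: "(real \<Rightarrow> complex) \<Rightarrow> bool" where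
  "l2b y \<longleftrightarrow> (\<exists>c>0. \<exists>N. \<forall>X\<ge>c. integral {c..X} (\<lambda>x. (cmod (y x))\<^sup>2) \<le> N)"

lemma sol_cont:
  assumes "sol Q y y'"
  shows "continuous_on {0<..} y" "continuous_on {0<..} y'"
  using assms unfolding sol_def
  by (auto intro!: continuous_at_imp_continuous_on intro: has_vector_derivative_continuous)

lemma wronski_const:
  assumes s1: "sol Q y1 y1'" and s2: "sol Q y2 y2'" and x: "x > 0"
  shows "y1 x * y2' x - y1' x * y2 x = y1 1 * y2' 1 - y1' 1 * y2 1"
proof -
  have "\<exists>c. \<forall>t\<in>{0<..}. y1 t * y2' t - y1' t * y2 t = c"
  proof (rule has_derivative_zero_constant)
    show "convex ({0<..} :: real set)" by simp
    fix t :: real assume t: "t \<in> {0<..}"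
    have d: "(y1 has_vector_derivative y1' t) (at t)" "(y1' has_vector_derivative Q t * y1 t) (at t)"
       "(y2 has_vector_derivative y2' t) (at t)" "(y2' has_vector_derivative Q t * y2 t) (at t)"
      using s1 s2 t unfolding sol_def by auto
    have "((\<lambda>t. y1 t * y2' t - y1' t * y2 t) has_vector_derivative
        (y1 t * (Q t * y2 t) + y1' t * y2' t - (y1' t * y2' t + Q t * y1 t * y2 t))) (at t)"
      by (intro has_vector_derivative_diff has_vector_derivative_mult d)
    then have "((\<lambda>t. y1 t * y2' t - y1' t * y2 t) has_vector_derivative 0) (at t)"
      by (simp add: algebra_simps)
    then show "((\<lambda>t. y1 t * y2' t - y1' t * y2 t) has_derivative (\<lambda>h. 0)) (at t within {0<..})"
      by (auto simp: has_vector_derivative_def intro: has_derivative_at_withinI)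
  qed
  then obtain c where "\<forall>t\<in>{0<..}. y1 t * y2' t - y1' t * y2 t = c" by blast
  then show ?thesis using x by force
qed

lemma half_contr: "(I::real) \<le> x / 2 \<Longrightarrow> x < I \<Longrightarrow> \<not> I \<le> 0 \<Longrightarrow> False" by linarith
lemma half_contr2: "(I::real) \<le> x / 2 \<Longrightarrow> x < 2 * I \<Longrightarrow> \<not> I \<le> 0 \<Longrightarrow> False" by linarith

lemma cs_aux:
  fixes I P R :: real
  assumes P: "P \<ge> 0" and R: "R \<ge> 0" and H: "\<And>t. t > 0 \<Longrightarrow> I \<le> (t * P + R / t) / 2"
  shows "I \<le> sqrt P * sqrt R"
proof (cases "P > 0 \<and> R > 0")
  case True
  have "sqrt R / sqrt P > 0" using True by simp
  from H[OF this] have "I \<le> (sqrt R / sqrt P * P + R / (sqrt R / sqrt P)) / 2" .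
  also have "\<dots> = sqrt P * sqrt R"
  proof -
    have sP: "sqrt P * sqrt P = P" and sR: "sqrt R * sqrt R = R" using P R by simp_all
    have p0: "sqrt P > 0" and r0: "sqrt R > 0" using True by simp_all
    have "sqrt R / sqrt P * P = sqrt R / sqrt P * (sqrt P * sqrt P)" by (simp only: sP)
    also have "\<dots> = sqrt P * sqrt R" using p0 by (simp add: field_simps)
    finally have 1: "sqrt R / sqrt P * P = sqrt P * sqrt R" .
    have "R / (sqrt R / sqrt P) = (sqrt R * sqrt R) / (sqrt R / sqrt P)" by (simp only: sR)
    also have "\<dots> = sqrt P * sqrt R" using p0 r0 by (simp add: field_simps)
    finally have 2: "R / (sqrt R / sqrt P) = sqrt P * sqrt R" .
    show ?thesis by (simp only: 1 2) simp
  qed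
  finally show ?thesis .
next
  case False
  then have "P = 0 \<or> R = 0" using P R by auto
  have "I \<le> 0"
  proof (rule ccontr)
    assume I: "\<not> I \<le> 0"
    show False
    proof (cases "P = 0")
      case True
      have t0: "R / I + 1 > 0" using I R by (intro add_nonneg_pos divide_nonneg_pos) auto
      have "I \<le> (R / (R / I + 1)) / 2" using H[OF t0] True by simp
      moreover have "R / (R / I + 1) < I"
        using I R by (simp add: field_simps add_pos_nonneg)
      ultimately show False using I half_contr by blast
    next
      case False
      then have R0: "R = 0" using \<open>P = 0 \<or> R = 0\<close> by auto
      have "I \<le> (I / (P + 1) * P) / 2" using H[of "I / (P + 1)"] R0 I P by simp
      moreover have "I / (P + 1) * P < 2 * I"
        using I P by (simp add: field_simps add_nonneg_pos)
      ultimately show False using I half_contr2 by blast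
    qed
  qed
  then show ?thesis using \<open>P = 0 \<or> R = 0\<close> by auto
qed

lemma cauchy_schwarz_int:
  fixes f g :: "real \<Rightarrow> real"
  assumes f: "continuous_on {a..b} f" and g: "continuous_on {a..b} g"
  shows "integral {a..b} (\<lambda>x. f x * g x) \<le> sqrt (integral {a..b} (\<lambda>x. (f x)\<^sup>2)) * sqrt (integral {a..b} (\<lambda>x. (g x)\<^sup>2))"
proof (rule cs_aux)
  show "0 \<le> integral {a..b} (\<lambda>x. (f x)\<^sup>2)" by (rule integral_nonneg) (auto intro!: integrable_continuous_real continuous_intros f)
  show "0 \<le> integral {a..b} (\<lambda>x. (g x)\<^sup>2)" by (rule integral_nonneg) (auto intro!: integrable_continuous_real continuous_intros g)
  fix t :: real assume t: "t > 0"
  have "integral {a..b} (\<lambda>x. f x * g x) \<le> integral {a..b} (\<lambda>x. (t * (f x)\<^sup>2 + (g x)\<^sup>2 / t) / 2)"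
  proof (rule integral_le)
    show "f x * g x \<le> (t * (f x)\<^sup>2 + (g x)\<^sup>2 / t) / 2" for x
    proof -
      have "0 \<le> (t * f x - g x)\<^sup>2 / t" using t by simp
      then show ?thesis using t by (simp add: field_simps power2_eq_square)
    qed
  qed (use t in \<open>auto intro!: integrable_continuous_real continuous_intros f g\<close>)
  also have "\<dots> = (t * integral {a..b} (\<lambda>x. (f x)\<^sup>2) + integral {a..b} (\<lambda>x. (g x)\<^sup>2) / t) / 2"
  proof (rule integral_unique)
    have i1: "((\<lambda>x. (f x)\<^sup>2) has_integral integral {a..b} (\<lambda>x. (f x)\<^sup>2)) {a..b}"
      by (rule integrable_integral) (auto intro!: integrable_continuous_real continuous_intros f)
    have i2: "((\<lambda>x. (g x)\<^sup>2) has_integral integral {a..b} (\<lambda>x. (g x)\<^sup>2)) {a..b}"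
      by (rule integrable_integral) (auto intro!: integrable_continuous_real continuous_intros g)
    show "((\<lambda>x. (t * (f x)\<^sup>2 + (g x)\<^sup>2 / t) / 2) has_integral
        (t * integral {a..b} (\<lambda>x. (f x)\<^sup>2) + integral {a..b} (\<lambda>x. (g x)\<^sup>2) / t) / 2) {a..b}"
      by (intro has_integral_divide has_integral_add has_integral_mult_right i1 i2)
  qed
  finally show "integral {a..b} (\<lambda>x. f x * g x) \<le> (t * integral {a..b} (\<lambda>x. (f x)\<^sup>2) + integral {a..b} (\<lambda>x. (g x)\<^sup>2) / t) / 2" .
qed

lemma tail_small:
  fixes f :: "real \<Rightarrow> real"
  assumes f: "continuous_on {c..} f" and nn: "\<And>x. x \<ge> c \<Longrightarrow> 0 \<le> f x"
    and N: "\<And>X. X \<ge> c \<Longrightarrow> integral {c..X} f \<le> N" and e: "e > 0"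
  shows "\<exists>a\<ge>c. \<forall>X\<ge>a. integral {a..X} f \<le> e"
proof -
  define S where "S = (SUP X\<in>{c..}. integral {c..X} f)"
  have bdd: "bdd_above ((\<lambda>X. integral {c..X} f) ` {c..})" using N by (auto intro!: bdd_aboveI2)
  have "S - e < S" using e by simp
  then obtain a where a: "a \<in> {c..}" "S - e < integral {c..a} f"
    unfolding S_def by (subst (asm) less_cSUP_iff[OF _ bdd]) auto
  show ?thesis
  proof (intro exI[of _ a] conjI allI impI)
    show "c \<le> a" using a by simp
    fix X assume X: "a \<le> X"
    have "integral {c..a} f + integral {a..X} f = integral {c..X} f"
      by (rule Henstock_Kurzweil_Integration.integral_combine)
         (use a X in \<open>auto intro!: integrable_continuous_real intro: continuous_on_subset[OF f]\<close>)
    moreover have "integral {c..X} f \<le> S" unfolding S_def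
      by (rule cSUP_upper[OF _ bdd]) (use a X in auto)
    ultimately show "integral {a..X} f \<le> e" using a by linarith
  qed
qed



lemma norm_sq_Re: "(cmod z)\<^sup>2 = Re (z * cnj z)"
  by (metis Re_complex_of_real complex_norm_square)

lemma deriv_normsq:
  assumes "(y has_vector_derivative d) (at x)"
  shows "((\<lambda>x. (cmod (y x))\<^sup>2) has_real_derivative 2 * Re (d * cnj (y x))) (at x)"
proof -
  have "((\<lambda>x. Re (y x * cnj (y x))) has_real_derivative Re (y x * cnj d + d * cnj (y x))) (at x)"
    by (intro has_field_derivative_Re has_vector_derivative_mult assms has_vector_derivative_cnj)
  moreover have "Re (y x * cnj d + d * cnj (y x)) = 2 * Re (d * cnj (y x))" by simp
  ultimately show ?thesis by (simp add: norm_sq_Re)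
qed

lemma ineq_m:
  fixes A x p q r :: real
  assumes A: "A \<ge> 1" and x: "x \<ge> 1" and p: "p \<ge> 0" and q: "q \<ge> 0" and r: "r \<le> p * q"
  shows "r * (2 * A * x) / (A * x\<^sup>2)\<^sup>2 \<le> p\<^sup>2 / (A * x\<^sup>2) / 2 + 2 * q\<^sup>2"
proof -
  have Ax: "A * x ^ 3 > 0" using A x by simp
  have e1: "r * (2 * A * x) / (A * x\<^sup>2)\<^sup>2 = 2 * r / (A * x ^ 3)"
    using A x by (simp add: field_simps power2_eq_square power3_eq_cube)
  have e2: "p\<^sup>2 / (A * x\<^sup>2) / 2 + 2 * q\<^sup>2 = (p\<^sup>2 * x / 2 + 2 * q\<^sup>2 * (A * x ^ 3)) / (A * x ^ 3)"
    using A x by (simp add: field_simps power2_eq_square power3_eq_cube)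
  have sq: "4 * x * p * q \<le> x\<^sup>2 * p\<^sup>2 + 4 * q\<^sup>2"
  proof -
    have "0 \<le> (x * p - 2 * q)\<^sup>2" by simp
    then show ?thesis by (simp add: power2_eq_square algebra_simps)
  qed
  have "2 * r \<le> 2 * p * q" using r by simp
  also have "\<dots> \<le> p\<^sup>2 * x / 2 + 2 * q\<^sup>2 / x"
  proof -
    have "2 * p * q = (4 * x * p * q) / (2 * x)" using x by (simp add: field_simps)
    also have "\<dots> \<le> (x\<^sup>2 * p\<^sup>2 + 4 * q\<^sup>2) / (2 * x)" using sq x by (intro divide_right_mono) auto
    also have "\<dots> = p\<^sup>2 * x / 2 + 2 * q\<^sup>2 / x" using x by (simp add: field_simps power2_eq_square)
    finally show ?thesis .
  qed
  also have "\<dots> \<le> p\<^sup>2 * x / 2 + 2 * q\<^sup>2 * (A * x ^ 3)"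
  proof -
    have x3: "1 \<le> x ^ 3" using x by (simp add: one_le_power)
    have "1 * 1 \<le> A * x ^ 3" using A x3 by (intro mult_mono) auto
    moreover have "1 / x \<le> 1" using x by simp
    ultimately have "1 / x \<le> A * x ^ 3" by simp
    then have "q\<^sup>2 * (1 / x) \<le> q\<^sup>2 * (A * x ^ 3)" by (intro mult_left_mono) auto
    then show ?thesis by simp
  qed
  finally have "2 * r \<le> p\<^sup>2 * x / 2 + 2 * q\<^sup>2 * (A * x ^ 3)" .
  then have "2 * r / (A * x ^ 3) \<le> (p\<^sup>2 * x / 2 + 2 * q\<^sup>2 * (A * x ^ 3)) / (A * x ^ 3)"
    using Ax by (intro divide_right_mono) auto
  then show ?thesis using e1 e2 by simp
qed

lemma energy:
  fixes Q y y' :: "real \<Rightarrow> complex"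
  assumes s: "sol Q y y'" and Q: "continuous_on {0<..} Q"
    and A: "A \<ge> 1" and a: "a \<ge> 1"
    and ReQ: "\<And>x. x \<ge> a \<Longrightarrow> Re (Q x) \<ge> - (A * x\<^sup>2)"
    and N: "\<And>X. X \<ge> a \<Longrightarrow> integral {a..X} (\<lambda>x. (cmod (y x))\<^sup>2) \<le> N"
  shows "\<exists>G. \<forall>X\<ge>a. integral {a..X} (\<lambda>x. (cmod (y' x))\<^sup>2 / (A * x\<^sup>2)) \<le> G"
proof -
  have yc: "continuous_on {0<..} y" "continuous_on {0<..} y'" using sol_cont[OF s] by auto
  have dy: "(y has_vector_derivative y' x) (at x)" "(y' has_vector_derivative Q x * y x) (at x)"
    if "x > 0" for x using s that by (auto simp: sol_def)
  define M where "M x = A * x\<^sup>2" for x :: real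
  define u where "u x = (cmod (y' x))\<^sup>2 / M x" for x
  define v where "v x = (cmod (y x))\<^sup>2" for x
  define h where "h x = Re (y' x * cnj (y x))" for x
  define g where "g x = h x / M x" for x
  define g' where "g' x = Re (Q x) * v x / M x + u x - h x * (2 * A * x) / (M x)\<^sup>2" for x
  have veq: "v = (\<lambda>x. (cmod (y x))\<^sup>2)" by (rule ext) (simp add: v_def)
  have vN: "integral {a..X} v \<le> N" if "X \<ge> a" for X using N[OF that] by (simp add: veq)
  have Mpos: "M x > 0" if "x > 0" for x using that A by (simp add: M_def)
  have M1: "M x \<ge> 1" if "x \<ge> 1" for x
  proof -
    have "1 * 1 \<le> A * x\<^sup>2" using A that by (intro mult_mono) (auto simp: one_le_power)
    then show ?thesis by (simp add: M_def)
  qed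
  have hd: "(h has_real_derivative Re (Q x) * v x + (cmod (y' x))\<^sup>2) (at x)" if x: "x > 0" for x
  proof -
    have "((\<lambda>x. Re (y' x * cnj (y x))) has_real_derivative
        Re (y' x * cnj (y' x) + Q x * y x * cnj (y x))) (at x)"
      by (intro has_field_derivative_Re has_vector_derivative_mult dy[OF x] has_vector_derivative_cnj)
    moreover have "Re (y' x * cnj (y' x) + Q x * y x * cnj (y x)) = Re (Q x) * v x + (cmod (y' x))\<^sup>2"
    proof -
      have "y x * cnj (y x) = of_real (v x)"
        by (simp only: v_def complex_norm_square)
      then have e: "Q x * y x * cnj (y x) = Q x * of_real (v x)"
        by (simp only: mult.assoc)
      have "Re (y' x * cnj (y' x) + Q x * y x * cnj (y x)) = Re (y' x * cnj (y' x)) + Re (Q x * of_real (v x))"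
        by (simp only: e plus_complex.sel)
      also have "\<dots> = Re (Q x) * v x + (cmod (y' x))\<^sup>2"
        by (simp add: norm_sq_Re)
      finally show ?thesis .
    qed
    ultimately show ?thesis by (simp add: h_def[abs_def])
  qed
  have gd: "(g has_real_derivative g' x) (at x)" if x: "x > 0" for x
  proof -
    have Md: "(M has_real_derivative 2 * A * x) (at x)"
      unfolding M_def[abs_def] by (auto intro!: derivative_eq_intros)
    have "((\<lambda>x. h x / M x) has_real_derivative
        ((Re (Q x) * v x + (cmod (y' x))\<^sup>2) * M x - h x * (2 * A * x)) / (M x * M x)) (at x)"
      by (rule DERIV_divide[OF hd[OF x] Md]) (use Mpos[OF x] in simp)
    moreover have "((Re (Q x) * v x + (cmod (y' x))\<^sup>2) * M x - h x * (2 * A * x)) / (M x * M x) = g' x"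
      using Mpos[OF x] by (simp add: g'_def u_def field_simps power2_eq_square)
    ultimately show ?thesis by (simp add: g_def[abs_def])
  qed
  have cu: "continuous_on {0<..} u" unfolding u_def M_def
    using A by (auto intro!: continuous_intros yc)
  have cv: "continuous_on {0<..} v" unfolding v_def by (auto intro!: continuous_intros yc)
  have ch: "continuous_on {0<..} h" unfolding h_def by (auto intro!: continuous_intros yc)
  have cg': "continuous_on {0<..} g'" unfolding g'_def M_def
    using A by (auto intro!: continuous_intros Q cu cv ch)
  have sub: "{p..q} \<subseteq> {0<..}" if "p \<ge> 1" for p q :: real using that by auto
  have intc: "f integrable_on {p..q}" if "continuous_on {0<..} f" "p \<ge> 1" for f :: "real \<Rightarrow> real" and p q
    by (rule integrable_continuous_real) (use that in \<open>auto intro: continuous_on_subset\<close>)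
  have ftc: "(g' has_integral (g X - g a)) {a..X}" if X: "X \<ge> a" for X
  proof (rule fundamental_theorem_of_calculus[OF X])
    fix x assume "x \<in> {a..X}"
    then have "x > 0" using a by auto
    from gd[OF this] show "(g has_vector_derivative g' x) (at x within {a..X})"
      unfolding has_real_derivative_iff_has_vector_derivative[symmetric] by (rule has_field_derivative_at_within)
  qed
  have pw: "u x \<le> 2 * g' x + 6 * v x" if x: "x \<ge> a" for x
  proof -
    have x1: "x \<ge> 1" using x a by simp
    have v0: "v x \<ge> 0" by (simp add: v_def)
    have "- (M x) * v x \<le> Re (Q x) * v x" using ReQ[OF x] v0 by (intro mult_right_mono) (auto simp: M_def)
    then have k: "- v x \<le> Re (Q x) * v x / M x" using Mpos[of x] x1 by (simp add: field_simps)
    have "h x \<le> cmod (y' x) * cmod (y x)"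
      unfolding h_def by (metis abs_Re_le_cmod abs_le_D1 complex_mod_cnj norm_mult)
    from ineq_m[OF A x1 _ _ this] have m: "h x * (2 * A * x) / (M x)\<^sup>2 \<le> u x / 2 + 2 * v x"
      by (simp add: M_def u_def v_def)
    show ?thesis using k m by (simp add: g'_def)
  qed
  define F where "F X = integral {a..X} u" for X
  define C1 where "C1 = 6 * N - 2 * g a"
  have Fb: "F X \<le> 2 * g X + C1" if X: "X \<ge> a" for X
  proof -
    have vi: "(v has_integral integral {a..X} v) {a..X}" by (rule integrable_integral) (rule intc[OF cv a])
    have "F X \<le> integral {a..X} (\<lambda>x. 2 * g' x + 6 * v x)"
      unfolding F_def by (rule integral_le) (use pw intc[OF cu a] ftc[OF X] vi in \<open>auto intro!: integrable_add integrable_on_mult_right simp: has_integral_integrable\<close>)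
    also have "\<dots> = 2 * (g X - g a) + 6 * integral {a..X} v"
      by (rule integral_unique) (intro has_integral_add has_integral_mult_right ftc[OF X] vi)
    also have "\<dots> \<le> 2 * (g X - g a) + 6 * N" using vN[OF X] by simp
    finally show ?thesis by (simp add: C1_def)
  qed
  have Fmono: "F X2 \<le> F X" if "a \<le> X2" "X2 \<le> X" for X2 X
    unfolding F_def
    by (rule integral_subset_le) (use that A in \<open>auto intro: intc[OF cu a] simp: u_def M_def\<close>)
  show ?thesis
  proof (cases "\<forall>X\<ge>a. F X \<le> C1 + 2")
    case True
    moreover have "u = (\<lambda>x. (cmod (y' x))\<^sup>2 / (A * x\<^sup>2))" by (rule ext) (simp add: u_def M_def)
    ultimately show ?thesis by (auto simp: F_def)
  next
    case False
    then obtain X2 where X2: "X2 \<ge> a" "F X2 > C1 + 2" by (auto simp: not_le)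
    have h1: "h x \<ge> 1" if x: "x \<ge> X2" for x
    proof -
      have "F x \<ge> F X2" using Fmono X2 x by auto
      then have "2 * g x > 2" using Fb[of x] X2 x by linarith
      then have "g x > 1" by simp
      then have "h x > M x" using Mpos[of x] X2 x a by (simp add: g_def field_simps)
      then show ?thesis using M1[of x] X2 x a by linarith
    qed
    have grow: "v x \<ge> 2 * (x - X2)" if x: "x \<ge> X2" for x
    proof -
      have "(\<lambda>x. v x - 2 * x) X2 \<le> (\<lambda>x. v x - 2 * x) x"
      proof (rule DERIV_nonneg_imp_increasing_open[OF x])
        fix t assume t: "X2 < t" "t < x"
        have t0: "t > 0" using t X2 a by simp
        have dv: "(v has_real_derivative 2 * h t) (at t)"
          unfolding veq h_def by (rule deriv_normsq[OF dy(1)[OF t0]])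
        have "((\<lambda>x. v x - 2 * x) has_real_derivative 2 * h t - 2) (at t)"
          by (intro DERIV_diff dv DERIV_cmult_Id)
        moreover have "2 * h t - 2 \<ge> 0" using h1[of t] t by simp
        ultimately show "\<exists>d. ((\<lambda>x. v x - 2 * x) has_real_derivative d) (at t) \<and> d \<ge> 0" by blast
      next
        show "continuous_on {X2..x} (\<lambda>x. v x - 2 * x)"
          using X2 a by (auto intro!: continuous_intros intro: continuous_on_subset[OF cv])
      qed
      moreover have "0 \<le> v X2" by (simp add: v_def)
      ultimately show ?thesis by simp
    qed
    define X3 where "X3 = X2 + 1"
    define XX where "XX = X3 + \<bar>N\<bar> + 1"
    have "XX - X3 \<le> integral {X3..XX} v"
    proof -
      have g1: "1 \<le> v x" if "x \<in> {X3..XX}" for x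
        using grow[of x] that by (simp add: X3_def)
      have "integral {X3..XX} (\<lambda>x. 1) \<le> integral {X3..XX} v"
        by (rule integral_le) (use g1 X2 a in \<open>auto simp: X3_def intro: intc[OF cv]\<close>)
      then show ?thesis by (simp add: XX_def)
    qed
    also have "\<dots> \<le> integral {a..XX} v"
      by (rule integral_subset_le) (use X2 a in \<open>auto simp: X3_def XX_def v_def intro: intc[OF cv]\<close>)
    also have "\<dots> \<le> N" using vN[of XX] X2 by (simp add: XX_def X3_def)
    finally show ?thesis by (simp add: XX_def)
  qed
qed



lemma half_sum: "2 * (a::real) \<le> b \<Longrightarrow> 2 * c \<le> d \<Longrightarrow> a + c \<le> b / 2 + d / 2" by linarith

lemma ineq_w:
  fixes s p1 q1 p2 q2 :: real
  assumes s: "s > 0" and W: "1 \<le> p1 * q2 + q1 * p2"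
  shows "1 / s \<le> ((p1)\<^sup>2 + (q2)\<^sup>2 / s\<^sup>2 + (p2)\<^sup>2 + (q1)\<^sup>2 / s\<^sup>2) / 2"
proof -
  have "1 / s \<le> (p1 * q2 + q1 * p2) / s" using W s by (intro divide_right_mono) auto
  also have "\<dots> = p1 * (q2 / s) + p2 * (q1 / s)" by (simp add: add_divide_distrib mult.commute)
  also have "\<dots> \<le> ((p1)\<^sup>2 + (q2 / s)\<^sup>2) / 2 + ((p2)\<^sup>2 + (q1 / s)\<^sup>2) / 2"
  proof -
    have "2 * (p1 * (q2 / s)) \<le> p1\<^sup>2 + (q2 / s)\<^sup>2" using sum_squares_bound[of p1 "q2 / s"] by (simp only: mult.assoc)
    moreover have "2 * (p2 * (q1 / s)) \<le> p2\<^sup>2 + (q1 / s)\<^sup>2" using sum_squares_bound[of p2 "q1 / s"] by (simp only: mult.assoc)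
    ultimately show ?thesis by (rule half_sum)
  qed
  also have "\<dots> = ((p1)\<^sup>2 + (q2)\<^sup>2 / s\<^sup>2 + (p2)\<^sup>2 + (q1)\<^sup>2 / s\<^sup>2) / 2"
    by (simp add: power_divide add_divide_distrib)
  finally show ?thesis .
qed

lemma l2b_from:
  assumes "l2b y" and yc: "continuous_on {0<..} y" and a: "a > 0"
  shows "\<exists>N. \<forall>X\<ge>a. integral {a..X} (\<lambda>x. (cmod (y x))\<^sup>2) \<le> N"
proof -
  obtain c N where c: "c > 0" and N: "\<And>X. X \<ge> c \<Longrightarrow> integral {c..X} (\<lambda>x. (cmod (y x))\<^sup>2) \<le> N"
    using assms(1) unfolding l2b_def by blast
  have cont: "continuous_on {p..q} (\<lambda>x. (cmod (y x))\<^sup>2)" if "p > 0" for p q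
    using that by (auto intro!: continuous_intros intro: continuous_on_subset[OF yc])
  define b where "b = max a c"
  define N' where "N' = \<bar>N\<bar> + integral {a..b} (\<lambda>x. (cmod (y x))\<^sup>2)"
  have "integral {a..X} (\<lambda>x. (cmod (y x))\<^sup>2) \<le> N'" if X: "X \<ge> a" for X
  proof (cases "X \<le> b")
    case True
    have "integral {a..X} (\<lambda>x. (cmod (y x))\<^sup>2) \<le> integral {a..b} (\<lambda>x. (cmod (y x))\<^sup>2)"
      by (rule integral_subset_le) (use True a c in \<open>auto intro!: integrable_continuous_real cont\<close>)
    then show ?thesis by (simp add: N'_def)
  next
    case False
    have "integral {a..b} (\<lambda>x. (cmod (y x))\<^sup>2) + integral {b..X} (\<lambda>x. (cmod (y x))\<^sup>2)
        = integral {a..X} (\<lambda>x. (cmod (y x))\<^sup>2)"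
      by (rule Henstock_Kurzweil_Integration.integral_combine) (use False a in \<open>auto simp: b_def intro!: integrable_continuous_real cont\<close>)
    moreover have "integral {b..X} (\<lambda>x. (cmod (y x))\<^sup>2) \<le> integral {c..X} (\<lambda>x. (cmod (y x))\<^sup>2)"
      by (rule integral_subset_le) (use False a c in \<open>auto simp: b_def intro!: integrable_continuous_real cont\<close>)
    moreover have "integral {c..X} (\<lambda>x. (cmod (y x))\<^sup>2) \<le> N" using N False by (simp add: b_def)
    ultimately show ?thesis by (simp add: N'_def)
  qed
  then show ?thesis by blast
qed

lemma case1_contra:
  fixes Q y1 y1' y2 y2' :: "real \<Rightarrow> complex"
  assumes s1: "sol Q y1 y1'" and s2: "sol Q y2 y2'" and Q: "continuous_on {0<..} Q"
    and W: "\<And>x. x > 0 \<Longrightarrow> y1 x * y2' x - y1' x * y2 x = 1"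
    and A: "A \<ge> 1" and x0: "x0 \<ge> 1" and ReQ: "\<And>x. x \<ge> x0 \<Longrightarrow> Re (Q x) \<ge> - (A * x\<^sup>2)"
    and l1: "l2b y1" and l2: "l2b y2"
  shows False
proof -
  have c1: "continuous_on {0<..} y1" "continuous_on {0<..} y1'" using sol_cont[OF s1] by auto
  have c2: "continuous_on {0<..} y2" "continuous_on {0<..} y2'" using sol_cont[OF s2] by auto
  define a where "a = x0"
  have a: "a \<ge> 1" "a > 0" using x0 by (auto simp: a_def)
  obtain N1 where N1: "\<And>X. X \<ge> a \<Longrightarrow> integral {a..X} (\<lambda>x. (cmod (y1 x))\<^sup>2) \<le> N1"
    using l2b_from[OF l1 c1(1) a(2)] by blast
  obtain N2 where N2: "\<And>X. X \<ge> a \<Longrightarrow> integral {a..X} (\<lambda>x. (cmod (y2 x))\<^sup>2) \<le> N2"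
    using l2b_from[OF l2 c2(1) a(2)] by blast
  obtain G1 where G1: "\<And>X. X \<ge> a \<Longrightarrow> integral {a..X} (\<lambda>x. (cmod (y1' x))\<^sup>2 / (A * x\<^sup>2)) \<le> G1"
    using energy[OF s1 Q A a(1) _ N1] ReQ by (auto simp: a_def)
  obtain G2 where G2: "\<And>X. X \<ge> a \<Longrightarrow> integral {a..X} (\<lambda>x. (cmod (y2' x))\<^sup>2 / (A * x\<^sup>2)) \<le> G2"
    using energy[OF s2 Q A a(1) _ N2] ReQ by (auto simp: a_def)
  define R where "R = (N1 + G2 + N2 + G1) / 2"
  define f where "f x = ((cmod (y1 x))\<^sup>2 + (cmod (y2' x))\<^sup>2 / (A * x\<^sup>2) + (cmod (y2 x))\<^sup>2 + (cmod (y1' x))\<^sup>2 / (A * x\<^sup>2)) / 2" for x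
  have sA: "sqrt A > 0" using A by simp
  have pw: "1 / (sqrt A * x) \<le> f x" if x: "x > 0" for x
  proof -
    have "1 = cmod (y1 x * y2' x - y1' x * y2 x)" using W[OF x] by simp
    also have "\<dots> \<le> cmod (y1 x) * cmod (y2' x) + cmod (y1' x) * cmod (y2 x)"
      by (metis norm_mult norm_triangle_ineq4)
    finally have "1 \<le> cmod (y1 x) * cmod (y2' x) + cmod (y1' x) * cmod (y2 x)" .
    from ineq_w[OF _ this, of "sqrt A * x"] sA x A show ?thesis
      by (simp add: f_def power_mult_distrib)
  qed
  have cf: "continuous_on {p..q} f" if "p > 0" for p q
    unfolding f_def using that A
    by (auto intro!: continuous_intros intro: continuous_on_subset[OF c1(1)] continuous_on_subset[OF c1(2)]
        continuous_on_subset[OF c2(1)] continuous_on_subset[OF c2(2)])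
  have bound: "(ln X - ln a) / sqrt A \<le> R" if X: "X \<ge> a" for X
  proof -
    have "((\<lambda>x. 1 / (sqrt A * x)) has_integral (ln X / sqrt A - ln a / sqrt A)) {a..X}"
    proof (rule fundamental_theorem_of_calculus[OF X])
      fix x assume "x \<in> {a..X}"
      then have x: "x > 0" using a by auto
      have "((\<lambda>x. ln x / sqrt A) has_real_derivative 1 / (sqrt A * x)) (at x within {a..X})"
        using x sA by (auto intro!: derivative_eq_intros simp: field_simps)
      then show "((\<lambda>x. ln x / sqrt A) has_vector_derivative 1 / (sqrt A * x)) (at x within {a..X})"
        by (simp add: has_real_derivative_iff_has_vector_derivative)
    qed
    then have "(ln X - ln a) / sqrt A = integral {a..X} (\<lambda>x. 1 / (sqrt A * x))"
      by (simp add: integral_unique diff_divide_distrib)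
    also have "\<dots> \<le> integral {a..X} f"
    proof (rule integral_le)
      show "(\<lambda>x. 1 / (sqrt A * x)) integrable_on {a..X}"
        using \<open>(_ has_integral _) _\<close> by (rule has_integral_integrable)
      show "f integrable_on {a..X}" using cf a by (auto intro!: integrable_continuous_real)
    qed (use pw a in auto)
    also have "\<dots> = (integral {a..X} (\<lambda>x. (cmod (y1 x))\<^sup>2) + integral {a..X} (\<lambda>x. (cmod (y2' x))\<^sup>2 / (A * x\<^sup>2))
        + integral {a..X} (\<lambda>x. (cmod (y2 x))\<^sup>2) + integral {a..X} (\<lambda>x. (cmod (y1' x))\<^sup>2 / (A * x\<^sup>2))) / 2"
    proof -
      have ci: "g integrable_on {a..X}" if "continuous_on {0<..} g" for g :: "real \<Rightarrow> real"
        by (rule integrable_continuous_real) (use that a in \<open>auto intro: continuous_on_subset\<close>)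
      have i1: "(\<lambda>x. (cmod (y1 x))\<^sup>2) integrable_on {a..X}" by (rule ci) (auto intro!: continuous_intros c1)
      have i2: "(\<lambda>x. (cmod (y2' x))\<^sup>2 / (A * x\<^sup>2)) integrable_on {a..X}" by (rule ci) (use A in \<open>auto intro!: continuous_intros c2\<close>)
      have i3: "(\<lambda>x. (cmod (y2 x))\<^sup>2) integrable_on {a..X}" by (rule ci) (auto intro!: continuous_intros c2)
      have i4: "(\<lambda>x. (cmod (y1' x))\<^sup>2 / (A * x\<^sup>2)) integrable_on {a..X}" by (rule ci) (use A in \<open>auto intro!: continuous_intros c1\<close>)
      show ?thesis unfolding f_def
        by (rule integral_unique) (intro has_integral_divide has_integral_add integrable_integral i1 i2 i3 i4)
    qed
    also have "\<dots> \<le> R" using N1[OF X] N2[OF X] G1[OF X] G2[OF X] by (simp add: R_def)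
    finally show ?thesis .
  qed
  define X where "X = a * exp (sqrt A * (\<bar>R\<bar> + 1))"
  have X: "X \<ge> a" using a sA by (simp add: X_def)
  have "ln X = ln a + sqrt A * (\<bar>R\<bar> + 1)" using a by (simp add: X_def ln_mult)
  then have "(ln X - ln a) / sqrt A = \<bar>R\<bar> + 1" using sA by simp
  with bound[OF X] show False by linarith
qed



lemma sq_sum_le: "((p::real) + q)\<^sup>2 \<le> 2 * p\<^sup>2 + 2 * q\<^sup>2"
proof -
  have "0 \<le> (p - q)\<^sup>2" by simp
  then show ?thesis by (simp add: power2_eq_square algebra_simps)
qed

lemma shift_l2:
  fixes Q Q0 y1 y1' y2 y2' z z' :: "real \<Rightarrow> complex"
  assumes s1: "sol Q y1 y1'" and s2: "sol Q y2 y2'" and s0: "sol Q0 z z'"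
    and \<delta>: "\<And>x. x > 0 \<Longrightarrow> Q x - Q0 x = \<delta>"
    and W: "\<And>x. x > 0 \<Longrightarrow> y1 x * y2' x - y1' x * y2 x = 1"
    and l1: "l2b y1" and l2: "l2b y2"
  shows "\<exists>a\<ge>1. \<exists>N. \<forall>X\<ge>a. integral {a..X} (\<lambda>x. (cmod (z x))\<^sup>2) \<le> N"
proof -
  have c1: "continuous_on {0<..} y1" "continuous_on {0<..} y1'" using sol_cont[OF s1] by auto
  have c2: "continuous_on {0<..} y2" "continuous_on {0<..} y2'" using sol_cont[OF s2] by auto
  have c0: "continuous_on {0<..} z" "continuous_on {0<..} z'" using sol_cont[OF s0] by auto
  obtain N1 where N1: "\<And>X. X \<ge> 1 \<Longrightarrow> integral {1..X} (\<lambda>x. (cmod (y1 x))\<^sup>2) \<le> N1"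
    using l2b_from[OF l1 c1(1), of 1] by auto
  obtain N2 where N2: "\<And>X. X \<ge> 1 \<Longrightarrow> integral {1..X} (\<lambda>x. (cmod (y2 x))\<^sup>2) \<le> N2"
    using l2b_from[OF l2 c2(1), of 1] by auto
  define \<eta> where "\<eta> x = cmod (y1 x) + cmod (y2 x)" for x
  have c\<eta>: "continuous_on {0<..} \<eta>" unfolding \<eta>_def by (auto intro!: continuous_intros c1 c2)
  have ci: "g integrable_on {p..q}" if "continuous_on {0<..} g" "p > 0" for g :: "real \<Rightarrow> real" and p q
    by (rule integrable_continuous_real) (use that in \<open>auto intro: continuous_on_subset\<close>)
  have cic: "g integrable_on {p..q}" if "continuous_on {0<..} g" "p > 0" for g :: "real \<Rightarrow> complex" and p q
    by (rule integrable_continuous_real) (use that in \<open>auto intro: continuous_on_subset\<close>)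
  have E1: "integral {1..X} (\<lambda>x. (\<eta> x)\<^sup>2) \<le> 2 * N1 + 2 * N2" if X: "X \<ge> 1" for X
  proof -
    have "integral {1..X} (\<lambda>x. (\<eta> x)\<^sup>2) \<le> integral {1..X} (\<lambda>x. 2 * (cmod (y1 x))\<^sup>2 + 2 * (cmod (y2 x))\<^sup>2)"
      by (rule integral_le) (auto simp: \<eta>_def intro!: ci continuous_intros c1 c2 sq_sum_le)
    also have "\<dots> = 2 * integral {1..X} (\<lambda>x. (cmod (y1 x))\<^sup>2) + 2 * integral {1..X} (\<lambda>x. (cmod (y2 x))\<^sup>2)"
      by (rule integral_unique) (intro has_integral_add has_integral_mult_right integrable_integral ci
          continuous_intros c1 c2 zero_less_one)
    also have "\<dots> \<le> 2 * N1 + 2 * N2" using N1[OF X] N2[OF X] by simp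
    finally show ?thesis .
  qed
  define \<epsilon> where "\<epsilon> = 1 / (2 * (cmod \<delta> + 1))"
  have nd: "0 < 2 * (cmod \<delta> + 1)" by (smt (verit) norm_ge_zero)
  have \<epsilon>: "\<epsilon> > 0" unfolding \<epsilon>_def using nd by (rule divide_pos_pos[OF zero_less_one])
  have \<epsilon>2: "2 * (cmod \<delta>)\<^sup>2 * \<epsilon>\<^sup>2 \<le> 1 / 2"
  proof -
    have "cmod \<delta> * \<epsilon> = cmod \<delta> / (2 * (cmod \<delta> + 1))" by (simp add: \<epsilon>_def)
    also have "\<dots> \<le> (cmod \<delta> + 1) / (2 * (cmod \<delta> + 1))"
      using nd by (intro divide_right_mono) auto
    also have "\<dots> = 1 / 2" using nd by simp
    finally have de: "cmod \<delta> * \<epsilon> \<le> 1 / 2" .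
    have "(cmod \<delta> * \<epsilon>)\<^sup>2 \<le> (1 / 2)\<^sup>2" using de \<epsilon> by (intro power_mono) auto
    then show ?thesis by (simp add: power_mult_distrib power2_eq_square mult_ac)
  qed
  obtain a where a: "a \<ge> 1" and Ea: "\<And>X. X \<ge> a \<Longrightarrow> integral {a..X} (\<lambda>x. (\<eta> x)\<^sup>2) \<le> \<epsilon>"
  proof -
    have "continuous_on {1..} \<eta>" by (rule continuous_on_subset[OF c\<eta>]) auto
    then have "continuous_on {1..} (\<lambda>x. (\<eta> x)\<^sup>2)" by (auto intro!: continuous_intros)
    from tail_small[OF this _ E1 \<epsilon>] have "\<exists>a\<ge>1. \<forall>X\<ge>a. integral {a..X} (\<lambda>x. (\<eta> x)\<^sup>2) \<le> \<epsilon>" by simp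
    then show ?thesis using that by blast
  qed
  define w1 where "w1 x = z x * y1' x - z' x * y1 x" for x
  define w2 where "w2 x = z x * y2' x - z' x * y2 x" for x
  have wd: "(w1 has_vector_derivative \<delta> * z x * y1 x) (at x)" "(w2 has_vector_derivative \<delta> * z x * y2 x) (at x)"
    if x: "x > 0" for x
  proof -
    have d: "(y1 has_vector_derivative y1' x) (at x)" "(y1' has_vector_derivative Q x * y1 x) (at x)"
       "(y2 has_vector_derivative y2' x) (at x)" "(y2' has_vector_derivative Q x * y2 x) (at x)"
       "(z has_vector_derivative z' x) (at x)" "(z' has_vector_derivative Q0 x * z x) (at x)"
      using s1 s2 s0 x unfolding sol_def by auto
    have "(w1 has_vector_derivative (z x * (Q x * y1 x) + z' x * y1' x - (z' x * y1' x + Q0 x * z x * y1 x))) (at x)"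
      unfolding w1_def[abs_def] by (intro has_vector_derivative_diff has_vector_derivative_mult d)
    moreover have "z x * (Q x * y1 x) + z' x * y1' x - (z' x * y1' x + Q0 x * z x * y1 x) = \<delta> * z x * y1 x"
      using \<delta>[OF x] by (auto simp: algebra_simps simp flip: \<delta>[OF x])
    ultimately show "(w1 has_vector_derivative \<delta> * z x * y1 x) (at x)" by simp
    have "(w2 has_vector_derivative (z x * (Q x * y2 x) + z' x * y2' x - (z' x * y2' x + Q0 x * z x * y2 x))) (at x)"
      unfolding w2_def[abs_def] by (intro has_vector_derivative_diff has_vector_derivative_mult d)
    moreover have "z x * (Q x * y2 x) + z' x * y2' x - (z' x * y2' x + Q0 x * z x * y2 x) = \<delta> * z x * y2 x"
      using \<delta>[OF x] by (auto simp: algebra_simps simp flip: \<delta>[OF x])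
    ultimately show "(w2 has_vector_derivative \<delta> * z x * y2 x) (at x)" by simp
  qed
  define J where "J x = integral {a..x} (\<lambda>t. cmod (z t) * \<eta> t)" for x
  define Z where "Z x = integral {a..x} (\<lambda>t. (cmod (z t))\<^sup>2)" for x
  define C where "C = cmod (w1 a) + cmod (w2 a)"
  have wb: "cmod (w1 x) \<le> cmod (w1 a) + cmod \<delta> * J x" "cmod (w2 x) \<le> cmod (w2 a) + cmod \<delta> * J x"
    if x: "x \<ge> a" for x
  proof -
    have ftc1: "((\<lambda>t. \<delta> * z t * y1 t) has_integral (w1 x - w1 a)) {a..x}"
    proof (rule fundamental_theorem_of_calculus[OF x])
      fix t assume "t \<in> {a..x}"
      then have "t > 0" using a by auto
      from wd(1)[OF this] show "(w1 has_vector_derivative \<delta> * z t * y1 t) (at t within {a..x})"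
        by (rule has_vector_derivative_at_within)
    qed
    have ftc2: "((\<lambda>t. \<delta> * z t * y2 t) has_integral (w2 x - w2 a)) {a..x}"
    proof (rule fundamental_theorem_of_calculus[OF x])
      fix t assume "t \<in> {a..x}"
      then have "t > 0" using a by auto
      from wd(2)[OF this] show "(w2 has_vector_derivative \<delta> * z t * y2 t) (at t within {a..x})"
        by (rule has_vector_derivative_at_within)
    qed
    note ftc = ftc1 ftc2
    have Ji: "(\<lambda>t. cmod \<delta> * (cmod (z t) * \<eta> t)) integrable_on {a..x}"
      using a by (auto intro!: ci continuous_intros c0 c\<eta>)
    have "cmod (w1 x - w1 a) \<le> integral {a..x} (\<lambda>t. cmod \<delta> * (cmod (z t) * \<eta> t))"
      unfolding integral_unique[OF ftc(1), symmetric]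
      by (rule integral_norm_bound_integral[OF has_integral_integrable[OF ftc(1)] Ji])
         (auto simp: norm_mult \<eta>_def mult.assoc intro!: mult_left_mono)
    also have "\<dots> = cmod \<delta> * J x" by (simp add: J_def)
    finally have "cmod (w1 x - w1 a) \<le> cmod \<delta> * J x" .
    then have "cmod (w1 a) + cmod (w1 x - w1 a) \<le> cmod (w1 a) + cmod \<delta> * J x" by (rule add_left_mono)
    with norm_triangle_sub[of "w1 x" "w1 a"] show "cmod (w1 x) \<le> cmod (w1 a) + cmod \<delta> * J x" by (rule order_trans)
    have "cmod (w2 x - w2 a) \<le> integral {a..x} (\<lambda>t. cmod \<delta> * (cmod (z t) * \<eta> t))"
      unfolding integral_unique[OF ftc(2), symmetric]
      by (rule integral_norm_bound_integral[OF has_integral_integrable[OF ftc(2)] Ji])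
         (auto simp: norm_mult \<eta>_def mult.assoc intro!: mult_left_mono)
    also have "\<dots> = cmod \<delta> * J x" by (simp add: J_def)
    finally have "cmod (w2 x - w2 a) \<le> cmod \<delta> * J x" .
    then have "cmod (w2 a) + cmod (w2 x - w2 a) \<le> cmod (w2 a) + cmod \<delta> * J x" by (rule add_left_mono)
    with norm_triangle_sub[of "w2 x" "w2 a"] show "cmod (w2 x) \<le> cmod (w2 a) + cmod \<delta> * J x" by (rule order_trans)
  qed
  have zrep: "z x = w2 x * y1 x - w1 x * y2 x" if "x > 0" for x
  proof -
    have "w2 x * y1 x - w1 x * y2 x = z x * (y1 x * y2' x - y1' x * y2 x)"
      by (simp add: w1_def w2_def algebra_simps)
    then show ?thesis using W[OF that] by simp
  qed
  have J0: "0 \<le> J x" if "x \<ge> a" for x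
    unfolding J_def by (rule integral_nonneg) (use that a in \<open>auto simp: \<eta>_def intro!: ci continuous_intros c0 c1 c2\<close>)
  have zb: "cmod (z x) \<le> (C + cmod \<delta> * J x) * \<eta> x" if x: "x \<ge> a" for x
  proof -
    have "cmod (z x) \<le> cmod (w2 x) * cmod (y1 x) + cmod (w1 x) * cmod (y2 x)"
      using zrep[of x] x a by (metis norm_mult norm_triangle_ineq4 less_le_trans zero_less_one)
    also have "\<dots> \<le> (C + cmod \<delta> * J x) * cmod (y1 x) + (C + cmod \<delta> * J x) * cmod (y2 x)"
    proof -
      have w1b: "cmod (w1 x) \<le> C + cmod \<delta> * J x" using wb(1)[OF x] norm_ge_zero[of "w2 a"] unfolding C_def by linarith
      have w2b: "cmod (w2 x) \<le> C + cmod \<delta> * J x" using wb(2)[OF x] norm_ge_zero[of "w1 a"] unfolding C_def by linarith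
      show ?thesis by (intro add_mono mult_right_mono w1b w2b norm_ge_zero)
    qed
    finally show ?thesis by (simp add: \<eta>_def algebra_simps)
  qed
  have cz2: "continuous_on {0<..} (\<lambda>t. (cmod (z t))\<^sup>2)" by (auto intro!: continuous_intros c0)
  have c\<eta>2: "continuous_on {0<..} (\<lambda>t. (\<eta> t)\<^sup>2)" by (auto intro!: continuous_intros c\<eta>)
  have Z0: "0 \<le> Z x" for x unfolding Z_def by (rule integral_nonneg) (use a in \<open>auto intro!: ci cz2\<close>)
  have Zmono: "Z x \<le> Z X" if "a \<le> x" "x \<le> X" for x X
    unfolding Z_def by (rule integral_subset_le) (use that a in \<open>auto intro!: ci cz2\<close>)
  have JZ: "(J x)\<^sup>2 \<le> Z x * \<epsilon>" if x: "x \<ge> a" for x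
  proof -
    have "J x \<le> sqrt (Z x) * sqrt (integral {a..x} (\<lambda>t. (\<eta> t)\<^sup>2))"
      unfolding J_def Z_def
      by (rule cauchy_schwarz_int) (use a in \<open>auto intro!: continuous_intros intro: continuous_on_subset[OF c0(1)] continuous_on_subset[OF c\<eta>]\<close>)
    then have "(J x)\<^sup>2 \<le> (sqrt (Z x) * sqrt (integral {a..x} (\<lambda>t. (\<eta> t)\<^sup>2)))\<^sup>2"
      using J0[OF x] by (intro power_mono) auto
    also have "\<dots> = Z x * integral {a..x} (\<lambda>t. (\<eta> t)\<^sup>2)"
    proof -
      have E0: "0 \<le> integral {a..x} (\<lambda>t. (\<eta> t)\<^sup>2)"
        by (rule integral_nonneg) (use a in \<open>auto intro!: ci c\<eta>2\<close>)
      show ?thesis using Z0[of x] E0 by (simp add: power_mult_distrib)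
    qed
    also have "\<dots> \<le> Z x * \<epsilon>" using Ea[OF x] Z0[of x] by (intro mult_left_mono) auto
    finally show ?thesis .
  qed
  have Zb: "Z X \<le> 4 * C\<^sup>2 * \<epsilon>" if X: "X \<ge> a" for X
  proof -
    define D where "D = 2 * C\<^sup>2 + 2 * (cmod \<delta>)\<^sup>2 * \<epsilon> * Z X"
    have D0: "0 \<le> D" using Z0[of X] \<epsilon> by (simp add: D_def)
    have pw: "(cmod (z x))\<^sup>2 \<le> D * (\<eta> x)\<^sup>2" if x: "x \<in> {a..X}" for x
    proof -
      have xa: "x \<ge> a" using x by auto
      have "(cmod (z x))\<^sup>2 \<le> ((C + cmod \<delta> * J x) * \<eta> x)\<^sup>2"
        using zb[OF xa] by (intro power_mono) auto
      also have "\<dots> = (C + cmod \<delta> * J x)\<^sup>2 * (\<eta> x)\<^sup>2" by (simp add: power_mult_distrib)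
      also have "\<dots> \<le> (2 * C\<^sup>2 + 2 * (cmod \<delta>)\<^sup>2 * (J x)\<^sup>2) * (\<eta> x)\<^sup>2"
        using sq_sum_le[of C "cmod \<delta> * J x"] by (intro mult_right_mono) (auto simp: power_mult_distrib)
      also have "\<dots> \<le> D * (\<eta> x)\<^sup>2"
      proof -
        have "(J x)\<^sup>2 \<le> Z X * \<epsilon>" using JZ[OF xa] Zmono[of x X] x \<epsilon>
          by (meson atLeastAtMost_iff mult_right_mono less_imp_le order_trans)
        then have "2 * (cmod \<delta>)\<^sup>2 * (J x)\<^sup>2 \<le> 2 * (cmod \<delta>)\<^sup>2 * (Z X * \<epsilon>)"
          by (intro mult_left_mono) auto
        then show ?thesis unfolding D_def by (intro mult_right_mono) (auto simp: algebra_simps)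
      qed
      finally show ?thesis .
    qed
    have "Z X \<le> integral {a..X} (\<lambda>x. D * (\<eta> x)\<^sup>2)"
      unfolding Z_def by (rule integral_le) (use pw a in \<open>auto intro!: ci cz2 continuous_intros c\<eta>\<close>)
    also have "\<dots> = D * integral {a..X} (\<lambda>x. (\<eta> x)\<^sup>2)" by simp
    also have "\<dots> \<le> D * \<epsilon>" using Ea[OF X] D0 by (intro mult_left_mono) auto
    also have "\<dots> = 2 * C\<^sup>2 * \<epsilon> + (2 * (cmod \<delta>)\<^sup>2 * \<epsilon>\<^sup>2) * Z X" by (simp add: D_def algebra_simps power2_eq_square)
    also have "\<dots> \<le> 2 * C\<^sup>2 * \<epsilon> + (1 / 2) * Z X" using \<epsilon>2 Z0[of X] by (intro add_left_mono mult_right_mono) auto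
    finally show ?thesis by simp
  qed
  show ?thesis using a Zb unfolding Z_def by blast
qed



lemma transfer_solution:
  fixes b db \<kappa> B :: "real \<Rightarrow> real" and Q y y' :: "real \<Rightarrow> complex"
  assumes bd: "\<And>x. x > 0 \<Longrightarrow> (b has_real_derivative db x) (at x)"
    and Bd: "\<And>x. x > 0 \<Longrightarrow> (B has_real_derivative b x) (at x)"
    and s: "sol Q y y'"
    and Qdef: "\<And>x. x > 0 \<Longrightarrow> Q x = of_real ((b x)\<^sup>2 + db x + 2 * \<kappa> x) + 2 * lam"
  shows "Lstar_solution b db \<kappa> lam (\<lambda>x. of_real (exp (B x)) * y x)
           (\<lambda>x. of_real (exp (B x)) * (of_real (b x) * y x + y' x))
           (\<lambda>x. of_real (exp (B x)) * (Q x * y x + 2 * of_real (b x) * y' x + of_real (db x + (b x)\<^sup>2) * y x))"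
  unfolding Lstar_solution_def
proof (intro allI impI conjI)
  fix x :: real assume x: "x > 0"
  have dy: "(y has_vector_derivative y' x) (at x)" "(y' has_vector_derivative Q x * y x) (at x)"
    using s x by (auto simp: sol_def)
  have de: "((\<lambda>x. exp (B x)) has_real_derivative exp (B x) * b x) (at x)"
    by (rule DERIV_fun_exp[OF Bd[OF x]])
  have dE: "((\<lambda>x. complex_of_real (exp (B x))) has_vector_derivative of_real (exp (B x) * b x)) (at x)"
    by (rule has_vector_derivative_of_real[OF de])
  have db': "((\<lambda>x. complex_of_real (b x)) has_vector_derivative of_real (db x)) (at x)"
    by (rule has_vector_derivative_of_real[OF bd[OF x]])
  have "((\<lambda>x. of_real (exp (B x)) * y x) has_vector_derivative
      (of_real (exp (B x)) * y' x + of_real (exp (B x) * b x) * y x)) (at x)"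
    by (rule has_vector_derivative_mult[OF dE dy(1)])
  then show "((\<lambda>x. of_real (exp (B x)) * y x) has_vector_derivative
      of_real (exp (B x)) * (of_real (b x) * y x + y' x)) (at x)"
    by (simp add: algebra_simps)
  have "((\<lambda>x. of_real (exp (B x)) * (of_real (b x) * y x + y' x)) has_vector_derivative
      (of_real (exp (B x)) * ((of_real (b x) * y' x + of_real (db x) * y x) + Q x * y x)
       + of_real (exp (B x) * b x) * (of_real (b x) * y x + y' x))) (at x)"
    by (intro has_vector_derivative_mult has_vector_derivative_add dE db' dy)
  then show "((\<lambda>x. of_real (exp (B x)) * (of_real (b x) * y x + y' x)) has_vector_derivative
      of_real (exp (B x)) * (Q x * y x + 2 * of_real (b x) * y' x + of_real (db x + (b x)\<^sup>2) * y x)) (at x)"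
    by (simp add: algebra_simps power2_eq_square)
  show "of_real (exp (B x)) * (Q x * y x + 2 * of_real (b x) * y' x + of_real (db x + (b x)\<^sup>2) * y x) / 2 -
        (complex_of_real (b x) * (of_real (exp (B x)) * (of_real (b x) * y x + y' x)) +
         complex_of_real (db x) * (of_real (exp (B x)) * y x)) -
        complex_of_real (\<kappa> x) * (of_real (exp (B x)) * y x) =
        lam * (of_real (exp (B x)) * y x)"
    using Qdef[OF x] by (simp add: algebra_simps power2_eq_square field_simps)
qed

lemma case2_contra:
  fixes b db :: "real \<Rightarrow> real" and Q y1 y1' y2 y2' :: "real \<Rightarrow> complex"
  assumes bd: "\<And>x. x > 0 \<Longrightarrow> (b has_real_derivative db x) (at x)"
    and bc: "continuous_on {0<..} b"
    and s1: "sol Q y1 y1'" and s2: "sol Q y2 y2'"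
    and W: "\<And>x. x > 0 \<Longrightarrow> y1 x * y2' x - y1' x * y2 x = 1"
    and l1: "l2b y1" and l2: "l2b y2"
    and Qd: "\<And>x. x > 0 \<Longrightarrow> Q x - of_real ((b x)\<^sup>2 + db x) = \<delta>"
  shows False
proof -
  define B where "B = pint b"
  have Bd: "(B has_real_derivative b x) (at x)" if "x > 0" for x
    unfolding B_def has_real_derivative_iff_has_vector_derivative by (rule pint_deriv[OF bc that])
  have Bc: "continuous_on {0<..} B" unfolding B_def by (rule pint_cont[OF bc])
  define s where "s x = exp (- 2 * B x)" for x
  have sc: "continuous_on {0<..} s" unfolding s_def by (auto intro!: continuous_intros Bc)
  have spos: "s x > 0" for x by (simp add: s_def)
  define S where "S = pint s"
  have Sd: "(S has_real_derivative s x) (at x)" if "x > 0" for x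
    unfolding S_def has_real_derivative_iff_has_vector_derivative by (rule pint_deriv[OF sc that])
  have Sc: "continuous_on {0<..} S" unfolding S_def by (rule pint_cont[OF sc])
  have es: "exp (B x) * s x = exp (- B x)" for x
    by (simp add: s_def exp_add[symmetric])
  define z where "z x = complex_of_real (exp (B x) * S x)" for x
  define z' where "z' x = complex_of_real (b x * exp (B x) * S x + exp (- B x))" for x
  define Q0 where "Q0 x = complex_of_real ((b x)\<^sup>2 + db x)" for x
  have sz: "sol Q0 z z'"
    unfolding sol_def
  proof (intro allI impI conjI)
    fix x :: real assume x: "x > 0"
    have "((\<lambda>x. exp (B x) * S x) has_real_derivative (exp (B x) * b x) * S x + exp (B x) * s x) (at x)"
      using x by (auto intro!: derivative_eq_intros Bd Sd simp: algebra_simps)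
    then have "((\<lambda>x. exp (B x) * S x) has_real_derivative b x * exp (B x) * S x + exp (- B x)) (at x)"
      by (simp add: es[symmetric] algebra_simps)
    from has_vector_derivative_of_real[OF this]
    show "(z has_vector_derivative z' x) (at x)" unfolding z_def[abs_def] z'_def by simp
    have d2: "((\<lambda>x. b x * exp (B x) * S x + exp (- B x)) has_real_derivative
        (b x * (exp (B x) * b x) + db x * exp (B x)) * S x + b x * exp (B x) * s x + exp (- B x) * (- b x)) (at x)"
      using x by (auto intro!: derivative_eq_intros Bd Sd bd simp: algebra_simps)
    have "((\<lambda>x. b x * exp (B x) * S x + exp (- B x)) has_real_derivative
        ((b x)\<^sup>2 + db x) * (exp (B x) * S x)) (at x)"
    proof -
      have "(b x * (exp (B x) * b x) + db x * exp (B x)) * S x + b x * exp (B x) * s x + exp (- B x) * (- b x)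
          = ((b x)\<^sup>2 + db x) * (exp (B x) * S x) + b x * (exp (B x) * s x - exp (- B x))"
        by (simp add: algebra_simps power2_eq_square)
      also have "\<dots> = ((b x)\<^sup>2 + db x) * (exp (B x) * S x)" by (simp add: es)
      finally show "?thesis" using d2 by simp
    qed
    from has_vector_derivative_of_real[OF this]
    show "(z' has_vector_derivative Q0 x * z x) (at x)" unfolding z_def z'_def[abs_def] Q0_def by simp
  qed
  have \<delta>: "Q x - Q0 x = \<delta>" if "x > 0" for x using Qd[OF that] by (simp add: Q0_def)
  obtain a N where a: "a \<ge> 1" and N: "\<And>X. X \<ge> a \<Longrightarrow> integral {a..X} (\<lambda>x. (cmod (z x))\<^sup>2) \<le> N"
    using shift_l2[OF s1 s2 sz \<delta> W l1 l2] by blast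
  have zc: "continuous_on {0<..} z" using sol_cont[OF sz] by simp
  define a' where "a' = max a 2"
  have a': "a' \<ge> a" "a' \<ge> 2" by (auto simp: a'_def)
  have Spos: "S x > 0" if "x > 1" for x
  proof -
    have "S 1 < S x"
    proof (rule DERIV_pos_imp_increasing[OF that])
      fix t :: real assume "1 \<le> t" "t \<le> x"
      then have "t > 0" by simp
      then show "\<exists>y. (S has_real_derivative y) (at t) \<and> 0 < y" using Sd spos by blast
    qed
    then show ?thesis by (simp add: S_def)
  qed
  have ci: "g integrable_on {p..q}" if "continuous_on {0<..} g" "p > 0" for g :: "real \<Rightarrow> real" and p q
    by (rule integrable_continuous_real) (use that in \<open>auto intro: continuous_on_subset\<close>)
  have cz2: "continuous_on {0<..} (\<lambda>x. (cmod (z x))\<^sup>2)" by (auto intro!: continuous_intros zc)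
  define X where "X = a' + \<bar>N\<bar> + 1 / S a' + 1"
  have Sa': "S a' > 0" using Spos a' by simp
  have X: "X \<ge> a'" using Sa' by (simp add: X_def)
  have i1: "integral {a'..X} (\<lambda>x. (cmod (z x))\<^sup>2) \<le> N"
  proof -
    have "integral {a'..X} (\<lambda>x. (cmod (z x))\<^sup>2) \<le> integral {a..X} (\<lambda>x. (cmod (z x))\<^sup>2)"
      by (rule integral_subset_le) (use a a' in \<open>auto intro!: ci cz2\<close>)
    also have "\<dots> \<le> N" using N a' X by simp
    finally show ?thesis .
  qed
  have ftc: "((\<lambda>x. s x / (S x)\<^sup>2) has_integral (- (1 / S X) - - (1 / S a'))) {a'..X}"
  proof (rule fundamental_theorem_of_calculus[OF X])
    fix x assume x: "x \<in> {a'..X}"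
    then have x1: "x > 1" "x > 0" using a' by auto
    have "((\<lambda>x. - (1 / S x)) has_real_derivative s x / (S x)\<^sup>2) (at x)"
      using Spos[OF x1(1)] Sd[OF x1(2)]
      by (auto intro!: derivative_eq_intros simp: power2_eq_square field_simps)
    then show "((\<lambda>x. - (1 / S x)) has_vector_derivative s x / (S x)\<^sup>2) (at x within {a'..X})"
      by (simp add: has_real_derivative_iff_has_vector_derivative[symmetric] has_field_derivative_at_within)
  qed
  have i2: "integral {a'..X} (\<lambda>x. s x / (S x)\<^sup>2) \<le> 1 / S a'"
    using integral_unique[OF ftc] Spos[of X] X a' by simp
  have pw: "2 \<le> (cmod (z x))\<^sup>2 + s x / (S x)\<^sup>2" if x: "x \<in> {a'..X}" for x
  proof -
    have Sx: "S x > 0" using Spos[of x] x a' by auto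
    define p where "p = exp (B x) * S x"
    define q where "q = exp (- B x) / S x"
    have pq: "p * q = 1" using Sx by (simp add: p_def q_def exp_minus field_simps)
    have "q\<^sup>2 = (exp (- B x))\<^sup>2 / (S x)\<^sup>2" by (simp add: q_def power_divide)
    also have "(exp (- B x))\<^sup>2 = s x" by (simp add: s_def power2_eq_square exp_add[symmetric])
    finally have q2: "q\<^sup>2 = s x / (S x)\<^sup>2" .
    have p2: "(cmod (z x))\<^sup>2 = p\<^sup>2" by (simp add: z_def p_def norm_mult power_mult_distrib)
    have "2 * p * q \<le> p\<^sup>2 + q\<^sup>2" by (rule sum_squares_bound)
    then show ?thesis using pq p2 q2 by (simp add: mult.assoc)
  qed
  have iz: "(\<lambda>x. (cmod (z x))\<^sup>2) integrable_on {a'..X}" by (rule ci[OF cz2]) (use a' in auto)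
  have "2 * (X - a') \<le> integral {a'..X} (\<lambda>x. (cmod (z x))\<^sup>2 + s x / (S x)\<^sup>2)"
  proof -
    have "integral {a'..X} (\<lambda>x. 2) \<le> integral {a'..X} (\<lambda>x. (cmod (z x))\<^sup>2 + s x / (S x)\<^sup>2)"
    proof (rule integral_le)
      show "(\<lambda>x. (cmod (z x))\<^sup>2 + s x / (S x)\<^sup>2) integrable_on {a'..X}"
        by (rule integrable_add[OF iz has_integral_integrable[OF ftc]])
    qed (use pw in auto)
    then show ?thesis using X by (simp add: mult.commute)
  qed
  also have "\<dots> = integral {a'..X} (\<lambda>x. (cmod (z x))\<^sup>2) + integral {a'..X} (\<lambda>x. s x / (S x)\<^sup>2)"
    by (rule integral_add[OF iz has_integral_integrable[OF ftc]])
  also have "\<dots> \<le> N + 1 / S a'" using i1 i2 by simp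
  finally have "2 * (X - a') \<le> N + 1 / S a'" .
  moreover have "X - a' = \<bar>N\<bar> + 1 / S a' + 1" by (simp add: X_def)
  ultimately show False using Sa' by (smt (verit) divide_pos_pos)
qed



theorem lemma2p1:
  fixes b db \<kappa> :: "real \<Rightarrow> real"
  assumes b_deriv: "\<And>x. x > 0 \<Longrightarrow> (b has_real_derivative db x) (at x)"
    and db_cont: "continuous_on {0<..} db"
    and \<kappa>_cont: "continuous_on {0<..} \<kappa>"
    and \<kappa>_nonneg: "\<And>x. x > 0 \<Longrightarrow> \<kappa> x \<ge> 0"
    and reg0: "regular_at_0 b \<kappa>"
    and inacc: "inaccessible_at_infty b \<kappa>"
    and cond: "Liminf at_top (\<lambda>z. ereal ((b z ^ 2 + db z + 2 * \<kappa> z) / z ^ 2)) > - \<infinity>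
               \<or> (\<forall>x>0. \<kappa> x = 0)"
  shows "Lstar_limit_point_at_infty b db \<kappa>"
proof -
  have bc: "continuous_on {0<..} b"
    by (rule continuous_at_imp_continuous_on) (auto intro: DERIV_isCont b_deriv)
  define B where "B = drift_prim b"
  have Bd: "(B has_real_derivative b x) (at x)" if "x > 0" for x
    unfolding B_def drift_prim_pint has_real_derivative_iff_has_vector_derivative
    by (rule pint_deriv[OF bc that])
  show ?thesis unfolding Lstar_limit_point_at_infty_def
  proof
    fix lam :: complex
    define Q where "Q x = complex_of_real ((b x)\<^sup>2 + db x + 2 * \<kappa> x) + 2 * lam" for x
    have Qc: "continuous_on {0<..} Q" unfolding Q_def
      by (auto intro!: continuous_intros bc db_cont \<kappa>_cont)
    obtain y1 y1' where s1: "sol Q y1 y1'" and i1: "y1 1 = 1" "y1' 1 = 0"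
      using ode_exists[OF Qc, of 1 0] unfolding sol_def by blast
    obtain y2 y2' where s2: "sol Q y2 y2'" and i2: "y2 1 = 0" "y2' 1 = 1"
      using ode_exists[OF Qc, of 0 1] unfolding sol_def by blast
    have W: "y1 x * y2' x - y1' x * y2 x = 1" if "x > 0" for x
      using wronski_const[OF s1 s2 that] i1 i2 by simp
    have notboth: "\<not> (l2b y1 \<and> l2b y2)"
    proof
      assume l: "l2b y1 \<and> l2b y2"
      from cond show False
      proof
        assume c1: "Liminf at_top (\<lambda>z. ereal ((b z ^ 2 + db z + 2 * \<kappa> z) / z ^ 2)) > - \<infinity>"
        obtain r where r: "ereal r < Liminf at_top (\<lambda>z. ereal ((b z ^ 2 + db z + 2 * \<kappa> z) / z ^ 2))"
        proof (cases "Liminf at_top (\<lambda>z. ereal ((b z ^ 2 + db z + 2 * \<kappa> z) / z ^ 2))" rule: ereal_cases)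
          case (real l)
          then show ?thesis using that[of "l - 1"] by simp
        next
          case PInf
          then show ?thesis using that[of 0] by simp
        next
          case MInf
          then show ?thesis using c1 by simp
        qed
        from less_LiminfD[OF r] obtain x1 where
          x1: "\<And>z. z \<ge> x1 \<Longrightarrow> r < (b z ^ 2 + db z + 2 * \<kappa> z) / z ^ 2"
          unfolding eventually_at_top_linorder by auto
        define x0 where "x0 = max x1 1"
        define A where "A = \<bar>r\<bar> + 2 * cmod lam + 1"
        have A: "A \<ge> 1" by (simp add: A_def)
        have x0: "x0 \<ge> 1" by (simp add: x0_def)
        have ReQ: "Re (Q z) \<ge> - (A * z\<^sup>2)" if z: "z \<ge> x0" for z
        proof -
          have z1: "z \<ge> 1" using z x0 by simp
          have z2: "z\<^sup>2 \<ge> 1" using z1 by (simp add: one_le_power)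
          have "r < (b z ^ 2 + db z + 2 * \<kappa> z) / z ^ 2" using x1[of z] z by (simp add: x0_def)
          moreover have zp: "z\<^sup>2 > 0" using z2 by linarith
          ultimately have "r * z\<^sup>2 < b z ^ 2 + db z + 2 * \<kappa> z" using pos_less_divide_eq[OF zp] by blast
          moreover have "- \<bar>r\<bar> * z\<^sup>2 \<le> r * z\<^sup>2" using z2 by (intro mult_right_mono) auto
          moreover have "- (2 * cmod lam) * z\<^sup>2 \<le> 2 * Re lam"
          proof -
            have "- (2 * cmod lam) * z\<^sup>2 \<le> - (2 * cmod lam) * 1"
              using z2 by (intro mult_left_mono_neg) auto
            moreover have "- cmod lam \<le> Re lam" using abs_Re_le_cmod[of lam] by linarith
            ultimately show ?thesis by linarith
          qed
          moreover have "Re (Q z) = b z ^ 2 + db z + 2 * \<kappa> z + 2 * Re lam" by (simp add: Q_def)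
          moreover have "- (A * z\<^sup>2) \<le> - \<bar>r\<bar> * z\<^sup>2 + - (2 * cmod lam) * z\<^sup>2"
            using z2 by (simp add: A_def algebra_simps)
          ultimately show ?thesis by linarith
        qed
        show False using case1_contra[OF s1 s2 Qc W A x0 ReQ] l by blast
      next
        assume k0: "\<forall>x>0. \<kappa> x = 0"
        have Qd: "Q x - of_real ((b x)\<^sup>2 + db x) = 2 * lam" if "x > 0" for x
          using k0 that by (simp add: Q_def)
        show False using case2_contra[OF b_deriv bc s1 s2 W _ _ Qd] l by blast
      qed
    qed
    obtain y y' where sy: "sol Q y y'" and nl: "\<not> l2b y"
      using notboth s1 s2 by blast
    have yc: "continuous_on {0<..} y" using sol_cont[OF sy] by simp
    have Qdef: "Q x = of_real ((b x)\<^sup>2 + db x + 2 * \<kappa> x) + 2 * lam" if "x > 0" for x by (simp add: Q_def)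
    have LS: "Lstar_solution b db \<kappa> lam (\<lambda>x. of_real (exp (B x)) * y x)
           (\<lambda>x. of_real (exp (B x)) * (of_real (b x) * y x + y' x))
           (\<lambda>x. of_real (exp (B x)) * (Q x * y x + 2 * of_real (b x) * y' x + of_real (db x + (b x)\<^sup>2) * y x))"
      by (rule transfer_solution[OF b_deriv Bd sy Qdef])
    have feq: "scale_dens b x * (cmod (of_real (exp (B x)) * y x))\<^sup>2 = (cmod (y x))\<^sup>2" for x
    proof -
      have "scale_dens b x * (cmod (of_real (exp (B x)) * y x))\<^sup>2
          = (exp (- 2 * B x) * (exp (B x))\<^sup>2) * (cmod (y x))\<^sup>2"
        by (simp add: scale_dens_def B_def norm_mult power_mult_distrib)
      also have "exp (- 2 * B x) * (exp (B x))\<^sup>2 = 1"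
        by (simp add: power2_eq_square exp_add[symmetric])
      finally show ?thesis by simp
    qed
    have nsq: "\<not> sq_int_near_infty (scale_dens b) (\<lambda>x. of_real (exp (B x)) * y x)"
    proof
      assume "sq_int_near_infty (scale_dens b) (\<lambda>x. of_real (exp (B x)) * y x)"
      then obtain c where c: "(\<lambda>x. (cmod (y x))\<^sup>2) integrable_on {c..}"
        unfolding sq_int_near_infty_def feq by blast
      define c' where "c' = max c 1"
      have "l2b y" unfolding l2b_def
      proof (intro exI conjI allI impI)
        show "c' > 0" by (simp add: c'_def)
        fix X assume X: "X \<ge> c'"
        show "integral {c'..X} (\<lambda>x. (cmod (y x))\<^sup>2) \<le> integral {c..} (\<lambda>x. (cmod (y x))\<^sup>2)"
        proof (rule integral_subset_le)
          show "(\<lambda>x. (cmod (y x))\<^sup>2) integrable_on {c'..X}"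
            by (rule integrable_continuous_real)
               (auto simp: c'_def intro!: continuous_intros intro: continuous_on_subset[OF yc])
        qed (use c in \<open>auto simp: c'_def\<close>)
      qed
      with nl show False by blast
    qed
    show "\<exists>\<phi> \<phi>1 \<phi>2. Lstar_solution b db \<kappa> lam \<phi> \<phi>1 \<phi>2 \<and> \<not> sq_int_near_infty (scale_dens b) \<phi>"
      using LS nsq by blast
  qed
qed

end
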